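(* Assume (A1)–(A8) and let $(x_i^k)$, $(y_i^k)$, $(\rho_i^k)$ ($i=1,\dots,n$) be generated by Algorithm PS. Then for each $i=1,\dots,n$: (a) $(\rho_i^k)_k$ is bounded; (b) $(x_i^k)_k$ is bounded; (c) there exist constants $\rho_{\min},\rho_{\max}$ (independent of $i$ and $k$) with $0<\rho_{\min}\le\rho_i^k\le\rho_{\max}<\infty$ for all $k\ge0$ and all $i$; (d) $(y_i^k)_k$ is bounded.
   Context: Standing setting. Let $\mathcal H_0,\dots,\mathcal H_{n-1}$ be real Hilbert spaces ($n\ge2$) and $\mathcal H_n:=\mathcal H_0$. Conventions: $0\cdot\infty=0$, $r\cdot\infty=\infty$ for $r>0$, $1/\infty=0$, $1/0=\infty$. For each $i=1,\dots,n$: (A1) $G_i:\mathcal H_0\to\mathcal H_i$ is bounded linear and $G_n=I$; (A2) $A_i:\mathcal H_i\rightrightarrows\mathcal H_i$ is maximal monotone; (A3) $B_i:\mathcal H_i\to\mathcal H_i$ is monotone and $\ell_i$-Lipschitz, $\ell_i\in[0,\infty)$; (A4) $C_i:\mathcal H_i\to\mathcal H_i$ is $\beta_i$-cocoercive with $\beta_i\in(0,\infty]$, i.e. $\langle x-y,C_ix-C_iy\rangle\ge\beta_i\|C_ix-C_iy\|^2$ for all $x,y$ (so $\beta_i=\infty$ means $C_i$ is constant, and then $1/(4\beta_i)=0$); (A5) $D_i:\mathcal H_i\to\mathcal H_i$ is monotone and continuously differentiable with $\|D_i'(x)-D_i'(y)\|\le m_i\|x-y\|$ for all $x,y$, $m_i\in[0,\infty)$;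 (A6) with $T_i:=A_i+B_i+C_i+D_i$, the inclusion $0\in\sum_{i=1}^nG_i^*T_i(G_iz)$ has at least one solution $z\in\mathcal H_0$; (A7) there is $\mathcal I_D\subset\{1,\dots,n\}$ with $m_i>0$ for $i\in\mathcal I_D$ and $m_i=0$, $D_i=0$ for $i\notin\mathcal I_D$. Notation: $D_{i,(u)}(x):=D_i(u)+D_i'(u)(x-u)$; for a maximal monotone $S$, $J_S:=(S+I)^{-1}$. $\boldsymbol{\mathcal H}:=\mathcal H_0\times\mathcal H_1\times\cdots\times\mathcal H_{n-1}$ with inner product $\langle p,\tilde p\rangle_\gamma:=\gamma\langle z,\tilde z\rangle+\sum_{i=1}^{n-1}\langle w_i,\tilde w_i\rangle$ for $p=(z,w_1,\dots,w_{n-1})$, $\tilde p=(\tilde z,\tilde w_1,\dots,\tilde w_{n-1})$, and norm $\|\cdot\|_\gamma$; for such $p$ one writes $w_n:=-\sum_{i=1}^{n-1}G_i^*w_i$. The extended solution set is $\mathcal S:=\{p\in\boldsymbol{\mathcal H}: w_i\in T_i(G_iz),\ i=1,\dots,n\}$ (with $w_n$ as just defined). Algorithm PS. Input: $(z^0,w_1^0,\dots,w_{n-1}^0)\in\boldsymbol{\mathcal H}$, $0<\underline\tau<\overline\tau<2$, $0<\underline\theta<\overline\theta<2$, $\hat\rho>0$, $\hat\delta>0$, $\gamma>0$; $w_n^0:=-\sum_{i=1}^{n-1}G_i^*w_i^0$. For $k=0,1,2,\dots$: for each $i=1,\dots,n$ define $(\rho_i^k,x_i^k,y_i^k)$ as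 follows. (i) If $w_i^k\in T_i(G_iz^k)$: $\rho_i^k=\hat\rho$, $x_i^k=G_iz^k$, $y_i^k=w_i^k$. (ii) Otherwise, if $i\in\mathcal I_D$: $\rho_i^k>0$ and $x_i^k=J_{\rho_i^k(A_i+D_{i,(G_iz^k)})}\big(G_iz^k+\rho_i^kw_i^k-\rho_i^k(B_i+C_i)(G_iz^k)\big)$ satisfy $\underline\theta\le4\ell_i^2(\rho_i^k)^2+(\beta_i^{-1}+\hat\delta)\rho_i^k+(m_i\rho_i^k\|x_i^k-G_iz^k\|)^2\le\overline\theta$, and $y_i^k=\frac{G_iz^k-x_i^k}{\rho_i^k}+w_i^k+[B_i(x_i^k)-B_i(G_iz^k)]+[D_i(x_i^k)-D_{i,(G_iz^k)}(x_i^k)]$. (iii) Otherwise ($i\notin\mathcal I_D$): some $\rho_i^k>0$ is chosen, $x_i^k=J_{\rho_i^kA_i}\big(G_iz^k+\rho_i^kw_i^k-\rho_i^k(B_i+C_i)(G_iz^k)\big)$ and $y_i^k=\frac{G_iz^k-x_i^k}{\rho_i^k}+w_i^k+[B_i(x_i^k)-B_i(G_iz^k)]$. Then set $u_i^k=x_i^k-G_ix_n^k$ ($i=1,\dots,n-1$), $v^k=\sum_{i=1}^nG_i^*y_i^k$, $\varphi_k=\langle z^k,v^k\rangle+\sum_{i=1}^{n-1}\langle w_i^k,u_i^k\rangle-\sum_{i=1}^n\big[\langle x_i^k,y_i^k\rangle+\frac1{4\beta_i}\|x_i^k-G_iz^k\|^2\big]$, $\pi_k=\gamma^{-1}\|v^k\|^2+\sum_{i=1}^{n-1}\|u_i^k\|^2$.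 If $\varphi_k>0$: choose $\tau_k\in[\underline\tau,\overline\tau]$, $\alpha_k=\tau_k\varphi_k/\pi_k$, $z^{k+1}=z^k-\gamma^{-1}\alpha_kv^k$, $w_i^{k+1}=w_i^k-\alpha_ku_i^k$ ($i=1,\dots,n-1$); otherwise $z^{k+1}=z^k$, $w_i^{k+1}=w_i^k$. Finally $w_n^{k+1}=-\sum_{i=1}^{n-1}G_i^*w_i^{k+1}$. (A8): for each $i\in\{1,\dots,n\}\setminus\mathcal I_D$ there are constants $\underline\rho_i,\overline\rho_i$ with $0<\underline\rho_i\le\rho_i^k\le\overline\rho_i<1/\big(\frac1{4\beta_i}+\ell_i\big)$ for all $k\ge0$ whenever $\rho_i^k$ is chosen in case (iii). *)

theory Defs
  imports "HOL-Analysis.Analysis" "HOL-Library.Extended_Real"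
begin

text \<open>All Hilbert spaces H_0,...,H_{n-1} are modelled as closed linear subspaces of one
ambient real Hilbert space of type 'a. Set-valued operators are functions 'a => 'a set.\<close>

definition closed_subspace :: "'a::real_inner set \<Rightarrow> bool" where
  "closed_subspace V \<longleftrightarrow> subspace V \<and> closed V"

definition bounded_linear_between :: "'a::real_inner set \<Rightarrow> 'a set \<Rightarrow> ('a \<Rightarrow> 'a) \<Rightarrow> bool" where
  "bounded_linear_between V W G \<longleftrightarrow>
     (\<forall>x\<in>V. G x \<in> W) \<and>
     (\<forall>x\<in>V. \<forall>y\<in>V. G (x + y) = G x + G y) \<and>
     (\<forall>c. \<forall>x\<in>V. G (c *\<^sub>R x) = c *\<^sub>R G x) \<and>
     (\<exists>K. \<forall>x\<in>V. norm (G x) \<le> K * norm x)"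

definition monotone_op :: "'a::real_inner set \<Rightarrow> ('a \<Rightarrow> 'a set) \<Rightarrow> bool" where
  "monotone_op V A \<longleftrightarrow>
     (\<forall>x. A x \<subseteq> V) \<and> (\<forall>x. x \<notin> V \<longrightarrow> A x = {}) \<and>
     (\<forall>x y u v. u \<in> A x \<longrightarrow> v \<in> A y \<longrightarrow> 0 \<le> inner (x - y) (u - v))"

definition maximal_monotone_op :: "'a::real_inner set \<Rightarrow> ('a \<Rightarrow> 'a set) \<Rightarrow> bool" where
  "maximal_monotone_op V A \<longleftrightarrow> monotone_op V A \<and>
     (\<forall>x\<in>V. \<forall>u\<in>V. (\<forall>y v. v \<in> A y \<longrightarrow> 0 \<le> inner (x - y) (u - v)) \<longrightarrow> u \<in> A x)"

definition monotone_fun_on :: "'a::real_inner set \<Rightarrow> ('a \<Rightarrow> 'a) \<Rightarrow> bool" where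
  "monotone_fun_on V B \<longleftrightarrow> (\<forall>x\<in>V. \<forall>y\<in>V. 0 \<le> inner (x - y) (B x - B y))"

definition T_op :: "('a::real_vector \<Rightarrow> 'a set) \<Rightarrow> ('a \<Rightarrow> 'a) \<Rightarrow> ('a \<Rightarrow> 'a) \<Rightarrow> ('a \<Rightarrow> 'a) \<Rightarrow> 'a \<Rightarrow> 'a set" where
  "T_op A B C D x = {a + B x + C x + D x | a. a \<in> A x}"

definition D_lin :: "('a::real_vector \<Rightarrow> 'a) \<Rightarrow> ('a \<Rightarrow> 'a \<Rightarrow> 'a) \<Rightarrow> 'a \<Rightarrow> 'a \<Rightarrow> 'a" where
  "D_lin D D' u x = D u + D' u (x - u)"

text \<open>x = J_S(p) where J_S := (S + I)^{-1}, i.e. p is in (S + I)(x).\<close>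
definition resolvent_rel :: "('a::real_vector \<Rightarrow> 'a set) \<Rightarrow> 'a \<Rightarrow> 'a \<Rightarrow> bool" where
  "resolvent_rel S p x \<longleftrightarrow> p \<in> (\<lambda>s. s + x) ` S x"

end

theory Submission imports Defs begin


lemma line_deriv:
  fixes D :: "'a::real_normed_vector \<Rightarrow> 'a"
  assumes V: "subspace V" and dD: "\<And>\<xi>. \<xi>\<in>V \<Longrightarrow> (D has_derivative D' \<xi>) (at \<xi> within V)"
    and u: "u \<in> V" and h: "h \<in> V"
  shows "((\<lambda>t. D (u + t *\<^sub>R h)) has_derivative (\<lambda>s. D' (u + t *\<^sub>R h) (s *\<^sub>R h))) (at t)"
proof -
  have f: "((\<lambda>t. u + t *\<^sub>R h) has_derivative (\<lambda>s. s *\<^sub>R h)) (at t within UNIV)"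
    by (auto intro!: derivative_eq_intros)
  have "(\<lambda>t. u + t *\<^sub>R h) ` UNIV \<subseteq> V" using V u h by (auto intro: subspace_add subspace_scale)
  from has_derivative_in_compose2[of V D D', OF dD this _ f] show ?thesis by simp
qed

lemma Dprime_mono:
  fixes D :: "'a::real_inner \<Rightarrow> 'a"
  assumes V: "subspace V" and dD: "\<And>\<xi>. \<xi>\<in>V \<Longrightarrow> (D has_derivative D' \<xi>) (at \<xi> within V)"
    and mono: "\<forall>x\<in>V. \<forall>y\<in>V. 0 \<le> inner (x - y) (D x - D y)"
    and u: "u \<in> V" and h: "h \<in> V"
  shows "0 \<le> inner h (D' u h)"
proof (rule ccontr)
  assume neg: "\<not> 0 \<le> inner h (D' u h)"
  have bl: "bounded_linear (D' u)" using dD[OF u] by (rule has_derivative_bounded_linear)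
  have d: "((\<lambda>t. D (u + t *\<^sub>R h)) has_derivative (\<lambda>s. D' u (s *\<^sub>R h))) (at 0)"
    using line_deriv[OF V dD u h, of 0] by simp
  have "((\<lambda>t. inner h (D (u + t *\<^sub>R h))) has_derivative (\<lambda>s. inner h (D' u (s *\<^sub>R h)))) (at 0)"
    using has_derivative_inner_right[OF d] by simp
  moreover have "(\<lambda>s. inner h (D' u (s *\<^sub>R h))) = (\<lambda>s. inner h (D' u h) * s)"
    using bl by (auto simp add: linear_simps bounded_linear.linear mult.commute)
  ultimately have "DERIV (\<lambda>t. inner h (D (u + t *\<^sub>R h))) 0 :> inner h (D' u h)"
    by (simp add: has_field_derivative_def)
  from DERIV_neg_dec_right[OF this] neg obtain d where d: "d > 0"
    "\<And>e. e > 0 \<Longrightarrow> e < d \<Longrightarrow> inner h (D (u + e *\<^sub>R h)) < inner h (D u)" by auto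
  have "inner h (D (u + (d/2) *\<^sub>R h)) < inner h (D u)" using d by auto
  moreover have "0 \<le> inner ((u + (d/2) *\<^sub>R h) - u) (D (u + (d/2) *\<^sub>R h) - D u)"
  proof -
    have "u + (d/2) *\<^sub>R h \<in> V" using V u h by (auto intro: subspace_add subspace_scale)
    thus ?thesis using mono u by blast
  qed
  ultimately show False using d(1)
    by (simp add: inner_diff_right)
qed

lemma D_mvt:
  fixes D :: "'a::real_inner \<Rightarrow> 'a"
  assumes V: "subspace V" and dD: "\<And>\<xi>. \<xi>\<in>V \<Longrightarrow> (D has_derivative D' \<xi>) (at \<xi> within V)"
    and u: "u \<in> V" and h: "h \<in> V"
    and M: "\<And>t. 0 \<le> t \<Longrightarrow> t \<le> 1 \<Longrightarrow> norm (D' (u + t *\<^sub>R h) h) \<le> M"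
  shows "norm (D (u + h) - D u) \<le> M"
proof -
  have d: "\<And>t. ((\<lambda>t. D (u + t *\<^sub>R h)) has_derivative (\<lambda>s. D' (u + t *\<^sub>R h) (s *\<^sub>R h))) (at t)"
    using line_deriv[OF V dD u h] by blast
  have "continuous_on {0..1} (\<lambda>t. D (u + t *\<^sub>R h))"
    using d by (meson continuous_at_imp_continuous_on has_derivative_continuous)
  from mvt_general[OF _ this d] obtain t where t: "t\<in>{0<..<1}"
    "norm (D (u + 1 *\<^sub>R h) - D (u + 0 *\<^sub>R h)) \<le> norm (D' (u + t *\<^sub>R h) ((1 - 0) *\<^sub>R h))" by auto
  thus ?thesis using M[of t] by simp
qed


lemma res_alg:
  fixes g x w b c a l bx dx :: "'a::real_vector"
  assumes r: "\<rho> \<noteq> 0" and e: "g + \<rho> *\<^sub>R w - \<rho> *\<^sub>R (b + c) = \<rho> *\<^sub>R (a + l) + x"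
  shows "(1/\<rho>) *\<^sub>R (g - x) + w + (bx - b) + (dx - l) = a + bx + c + dx"
proof -
  have "g - x = \<rho> *\<^sub>R (a + l - w + b + c)" using e by (simp add: algebra_simps)
  hence "(1/\<rho>) *\<^sub>R (g - x) = a + l - w + b + c" using r by simp
  thus ?thesis by (simp add: algebra_simps)
qed

lemma coco:
  fixes d e \<Delta> :: "'a::real_inner"
  assumes b: "0 < \<beta>" and h: "\<beta> * ereal ((norm \<Delta>)\<^sup>2) \<le> ereal (inner d \<Delta>)"
  shows "0 \<le> inner (e + d) \<Delta> + real_of_ereal (inverse (4 * \<beta>)) * (norm e)\<^sup>2"
proof (cases \<beta>)
  case (real r)
  with b have r: "r > 0" by simp
  from h real have h': "r * (norm \<Delta>)\<^sup>2 \<le> inner d \<Delta>" by simp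
  have inv: "real_of_ereal (inverse (4 * \<beta>)) = 1 / (4*r)" using real r by (simp add: inverse_eq_divide)
  have cs: "- (norm e * norm \<Delta>) \<le> inner e \<Delta>"
    using Cauchy_Schwarz_ineq2[of e \<Delta>] by (simp add: abs_le_iff)
  have "0 \<le> (2*r*norm \<Delta> - norm e)\<^sup>2 / (4*r)" using r by simp
  also have "\<dots> = r * (norm \<Delta>)\<^sup>2 - norm e * norm \<Delta> + (norm e)\<^sup>2 / (4*r)"
    using r by (simp add: field_simps power2_eq_square)
  finally show ?thesis using cs h' inv by (simp add: inner_add_left)
next
  case PInf
  have "\<Delta> = 0"
  proof (rule ccontr)
    assume "\<Delta> \<noteq> 0" hence "(norm \<Delta>)\<^sup>2 > 0" by simp
    with h PInf show False by simp
  qed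
  thus ?thesis using PInf by simp
next
  case MInf with b show ?thesis by simp
qed

definition bd :: "(nat \<Rightarrow> 'b::real_normed_vector) \<Rightarrow> bool" where
  "bd f \<longleftrightarrow> (\<exists>M. \<forall>k. norm (f k) \<le> M)"

lemma bdE: assumes "bd f" obtains M where "0 \<le> M" "\<And>k. norm (f k) \<le> M"
proof -
  from assms obtain M where M: "\<And>k. norm (f k) \<le> M" unfolding bd_def by blast
  have "0 \<le> M" using M[of 0] norm_ge_zero[of "f 0"] by linarith
  with M that show ?thesis by blast
qed

lemma bdI: "(\<And>k. norm (f k) \<le> M) \<Longrightarrow> bd f" unfolding bd_def by blast

lemma norm4: "norm (a + b + c + d) \<le> norm a + norm b + norm c + norm (d::'b::real_normed_vector)"
proof -
  have "norm (a+b+c+d) \<le> norm (a+b+c) + norm d" "norm(a+b+c) \<le> norm(a+b) + norm c"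
    "norm (a+b) \<le> norm a + norm b" by (rule norm_triangle_ineq)+
  thus ?thesis by linarith
qed

lemma res_bound:
  fixes x g P :: "'b::real_inner"
  assumes "0 \<le> inner (x - g) (P - x)" shows "norm (x - g) \<le> norm (P - g)"
proof -
  have "inner (x - g) (P - g) - inner (x - g) (x - g) = inner (x - g) (P - x)"
    by (simp add: inner_diff_right)
  hence "norm (x - g) * norm (x - g) \<le> inner (x - g) (P - g)" using assms
    by (simp add: power2_norm_eq_inner[symmetric] power2_eq_square)
  also have "\<dots> \<le> norm (x - g) * norm (P - g)" by (rule norm_cauchy_schwarz)
  finally have *: "norm (x - g) * norm (x - g) \<le> norm (x - g) * norm (P - g)" .
  show ?thesis
  proof (cases "norm (x - g) = 0")
    case True thus ?thesis by simp
  next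
    case False hence "norm (x - g) > 0" by simp
    with * show ?thesis by simp
  qed
qed

lemma coco_lip:
  fixes d \<Delta> :: "'b::real_inner"
  assumes b: "0 < \<beta>" and h: "\<beta> * ereal ((norm \<Delta>)\<^sup>2) \<le> ereal (inner d \<Delta>)"
  shows "norm \<Delta> \<le> real_of_ereal (inverse \<beta>) * norm d"
proof (cases \<beta>)
  case (real r)
  with b have r: "r > 0" by simp
  from h real have h': "r * (norm \<Delta>)\<^sup>2 \<le> inner d \<Delta>" by simp
  also have "\<dots> \<le> norm d * norm \<Delta>" using norm_cauchy_schwarz by blast
  finally have *: "norm \<Delta> * (r * norm \<Delta>) \<le> norm \<Delta> * norm d" by (simp add: power2_eq_square ac_simps)
  have "r * norm \<Delta> \<le> norm d"
  proof (cases "norm \<Delta> = 0")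
    case True thus ?thesis by simp
  next
    case False hence "norm \<Delta> > 0" by simp
    with * show ?thesis by simp
  qed
  thus ?thesis using real r by (simp add: field_simps)
next
  case PInf
  have "\<Delta> = 0"
  proof (rule ccontr)
    assume "\<Delta> \<noteq> 0" hence "(norm \<Delta>)\<^sup>2 > 0" by simp
    with h PInf show False by simp
  qed
  thus ?thesis using PInf by simp
next
  case MInf with b show ?thesis by simp
qed

lemma normP: "norm (p - r *\<^sub>R (a + l) - g) \<le> norm p + \<bar>r\<bar> * (norm a + norm l) + norm (g::'b::real_normed_vector)"
proof -
  have "norm (p - r *\<^sub>R (a + l) - g) \<le> norm (p - r *\<^sub>R (a + l)) + norm g" by (rule norm_triangle_ineq4)
  also have "norm (p - r *\<^sub>R (a + l)) \<le> norm p + norm (r *\<^sub>R (a + l))" by (rule norm_triangle_ineq4)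
  also have "norm (r *\<^sub>R (a + l)) \<le> \<bar>r\<bar> * (norm a + norm l)"
    by (simp add: mult_left_mono norm_triangle_ineq)
  finally show ?thesis by simp
qed

lemma quad_mono: "0 \<le> K \<Longrightarrow> 0 \<le> m \<Longrightarrow> t \<le> M \<Longrightarrow> 0 \<le> t \<Longrightarrow> (K + m * t) * t \<le> (K + m * M) * (M::real)"
  by (intro mult_mono add_left_mono mult_left_mono) auto

locale PS =
  fixes H :: "nat \<Rightarrow> 'a::{real_inner, complete_space} set"
    and n :: nat
    and G Gadj :: "nat \<Rightarrow> 'a \<Rightarrow> 'a"
    and A :: "nat \<Rightarrow> 'a \<Rightarrow> 'a set"
    and B C D :: "nat \<Rightarrow> 'a \<Rightarrow> 'a"
    and D' :: "nat \<Rightarrow> 'a \<Rightarrow> 'a \<Rightarrow> 'a"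
    and ell m :: "nat \<Rightarrow> real"
    and \<beta> :: "nat \<Rightarrow> ereal"
    and ID :: "nat set"
    and \<tau>lo \<tau>hi \<theta>lo \<theta>hi \<rho>hat \<delta>hat \<gamma> :: real
    and z :: "nat \<Rightarrow> 'a"
    and w x y u :: "nat \<Rightarrow> nat \<Rightarrow> 'a"
    and v :: "nat \<Rightarrow> 'a"
    and \<rho> :: "nat \<Rightarrow> nat \<Rightarrow> real"
    and \<tau> \<alpha> \<phi> \<pi> :: "nat \<Rightarrow> real"
  assumes n2: "n \<ge> 2"
    and H_sub: "\<forall>i\<le>n. closed_subspace (H i)"
    and H_n: "H n = H 0"
    and A1: "\<forall>i\<in>{1..n}. bounded_linear_between (H 0) (H i) (G i)"
    and A1n: "\<forall>\<xi>\<in>H 0. G n \<xi> = \<xi>"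
    and adj: "\<forall>i\<in>{1..n}. \<forall>\<eta>\<in>H i. Gadj i \<eta> \<in> H 0 \<and>
                 (\<forall>\<xi>\<in>H 0. inner (G i \<xi>) \<eta> = inner \<xi> (Gadj i \<eta>))"
    and A2: "\<forall>i\<in>{1..n}. maximal_monotone_op (H i) (A i)"
    and A3: "\<forall>i\<in>{1..n}. (\<forall>\<xi>\<in>H i. B i \<xi> \<in> H i) \<and> monotone_fun_on (H i) (B i) \<and> 0 \<le> ell i \<and>
               (\<forall>\<xi>\<in>H i. \<forall>\<eta>\<in>H i. norm (B i \<xi> - B i \<eta>) \<le> ell i * norm (\<xi> - \<eta>))"
    \<comment> \<open>(A4), with ereal conventions: \<infinity> * 0 = 0\<close>
    and A4: "\<forall>i\<in>{1..n}. (\<forall>\<xi>\<in>H i. C i \<xi> \<in> H i) \<and> 0 < \<beta> i \<and>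
               (\<forall>\<xi>\<in>H i. \<forall>\<eta>\<in>H i. \<beta> i * ereal ((norm (C i \<xi> - C i \<eta>))\<^sup>2)
                                      \<le> ereal (inner (\<xi> - \<eta>) (C i \<xi> - C i \<eta>)))"
    and A5: "\<forall>i\<in>{1..n}. (\<forall>\<xi>\<in>H i. D i \<xi> \<in> H i) \<and> monotone_fun_on (H i) (D i) \<and> 0 \<le> m i \<and>
               (\<forall>\<xi>\<in>H i. (D i has_derivative D' i \<xi>) (at \<xi> within H i) \<and>
                           (\<forall>h\<in>H i. D' i \<xi> h \<in> H i)) \<and>
               (\<forall>\<xi>\<in>H i. \<forall>\<eta>\<in>H i. \<forall>h\<in>H i.
                   norm (D' i \<xi> h - D' i \<eta> h) \<le> m i * norm (\<xi> - \<eta>) * norm h)"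
    and A6: "\<exists>\<zeta>\<in>H 0. \<exists>q :: nat \<Rightarrow> 'a. (\<forall>i\<in>{1..n}. q i \<in> T_op (A i) (B i) (C i) (D i) (G i \<zeta>)) \<and>
               (\<Sum>i=1..n. Gadj i (q i)) = 0"
    and A7: "ID \<subseteq> {1..n} \<and> (\<forall>i\<in>ID. 0 < m i) \<and>
               (\<forall>i\<in>{1..n} - ID. m i = 0 \<and> (\<forall>\<xi>\<in>H i. D i \<xi> = 0))"
    and par: "0 < \<tau>lo \<and> \<tau>lo < \<tau>hi \<and> \<tau>hi < 2 \<and> 0 < \<theta>lo \<and> \<theta>lo < \<theta>hi \<and> \<theta>hi < 2 \<and>
              0 < \<rho>hat \<and> 0 < \<delta>hat \<and> 0 < \<gamma>"
    and init: "z 0 \<in> H 0 \<and> (\<forall>i\<in>{1..n-1}. w 0 i \<in> H i)"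
    and wn: "\<forall>k. w k n = - (\<Sum>i=1..n-1. Gadj i (w k i))"
    and step_i: "\<forall>k. \<forall>i\<in>{1..n}. w k i \<in> T_op (A i) (B i) (C i) (D i) (G i (z k)) \<longrightarrow>
                   \<rho> k i = \<rho>hat \<and> x k i = G i (z k) \<and> y k i = w k i"
    and step_ii: "\<forall>k. \<forall>i\<in>ID. w k i \<notin> T_op (A i) (B i) (C i) (D i) (G i (z k)) \<longrightarrow>
                   0 < \<rho> k i \<and>
                   resolvent_rel (\<lambda>\<xi>. {\<rho> k i *\<^sub>R (a + D_lin (D i) (D' i) (G i (z k)) \<xi>) | a. a \<in> A i \<xi>})
                     (G i (z k) + \<rho> k i *\<^sub>R w k i - \<rho> k i *\<^sub>R (B i (G i (z k)) + C i (G i (z k))))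
                     (x k i) \<and>
                   \<theta>lo \<le> 4 * (ell i)\<^sup>2 * (\<rho> k i)\<^sup>2 + (real_of_ereal (inverse (\<beta> i)) + \<delta>hat) * \<rho> k i
                          + (m i * \<rho> k i * norm (x k i - G i (z k)))\<^sup>2 \<and>
                   4 * (ell i)\<^sup>2 * (\<rho> k i)\<^sup>2 + (real_of_ereal (inverse (\<beta> i)) + \<delta>hat) * \<rho> k i
                          + (m i * \<rho> k i * norm (x k i - G i (z k)))\<^sup>2 \<le> \<theta>hi \<and>
                   y k i = (1 / \<rho> k i) *\<^sub>R (G i (z k) - x k i) + w k i
                           + (B i (x k i) - B i (G i (z k)))
                           + (D i (x k i) - D_lin (D i) (D' i) (G i (z k)) (x k i))"
    and step_iii: "\<forall>k. \<forall>i\<in>{1..n} - ID. w k i \<notin> T_op (A i) (B i) (C i) (D i) (G i (z k)) \<longrightarrow>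
                   0 < \<rho> k i \<and>
                   resolvent_rel (\<lambda>\<xi>. {\<rho> k i *\<^sub>R a | a. a \<in> A i \<xi>})
                     (G i (z k) + \<rho> k i *\<^sub>R w k i - \<rho> k i *\<^sub>R (B i (G i (z k)) + C i (G i (z k))))
                     (x k i) \<and>
                   y k i = (1 / \<rho> k i) *\<^sub>R (G i (z k) - x k i) + w k i
                           + (B i (x k i) - B i (G i (z k)))"
    and u_def: "\<forall>k. \<forall>i\<in>{1..n-1}. u k i = x k i - G i (x k n)"
    and v_def: "\<forall>k. v k = (\<Sum>i=1..n. Gadj i (y k i))"
    and phi_def: "\<forall>k. \<phi> k = inner (z k) (v k) + (\<Sum>i=1..n-1. inner (w k i) (u k i))
                     - (\<Sum>i=1..n. inner (x k i) (y k i)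
                          + real_of_ereal (inverse (4 * \<beta> i)) * (norm (x k i - G i (z k)))\<^sup>2)"
    and pi_def: "\<forall>k. \<pi> k = (1 / \<gamma>) * (norm (v k))\<^sup>2 + (\<Sum>i=1..n-1. (norm (u k i))\<^sup>2)"
    and upd_pos: "\<forall>k. 0 < \<phi> k \<longrightarrow>
                   \<tau>lo \<le> \<tau> k \<and> \<tau> k \<le> \<tau>hi \<and> \<alpha> k = \<tau> k * \<phi> k / \<pi> k \<and>
                   z (Suc k) = z k - (\<alpha> k / \<gamma>) *\<^sub>R v k \<and>
                   (\<forall>i\<in>{1..n-1}. w (Suc k) i = w k i - \<alpha> k *\<^sub>R u k i)"
    and upd_nonpos: "\<forall>k. \<not> 0 < \<phi> k \<longrightarrow>
                   z (Suc k) = z k \<and> (\<forall>i\<in>{1..n-1}. w (Suc k) i = w k i)"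
    \<comment> \<open>(A8); upper bound 1/(1/(4 beta_i) + l_i) computed in ereal (1/0 = \<infinity>)\<close>
    and A8: "\<forall>i\<in>{1..n} - ID. \<exists>\<rho>lo \<rho>up. 0 < \<rho>lo \<and> \<rho>lo \<le> \<rho>up \<and>
               ereal \<rho>up < inverse (inverse (4 * \<beta> i) + ereal (ell i)) \<and>
               (\<forall>k. w k i \<notin> T_op (A i) (B i) (C i) (D i) (G i (z k)) \<longrightarrow>
                     \<rho>lo \<le> \<rho> k i \<and> \<rho> k i \<le> \<rho>up)"

begin

lemma sub: "i \<le> n \<Longrightarrow> subspace (H i)"
  using H_sub by (simp add: closed_subspace_def)

lemma subI: "i \<in> {1..n} \<Longrightarrow> subspace (H i)" using sub by auto

lemma n_in: "n \<in> {1..n}" using n2 by auto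

lemma sum_last: "sum f {1..n} = sum f {1..n-1} + f n"
  using n2 by (cases n) (auto simp: sum.cl_ivl_Suc)

lemma G_in: "i \<in> {1..n} \<Longrightarrow> \<xi> \<in> H 0 \<Longrightarrow> G i \<xi> \<in> H i"
  using A1 by (auto simp: bounded_linear_between_def)

definition GK where "GK i = (SOME K. 0 \<le> K \<and> (\<forall>\<xi>\<in>H 0. norm (G i \<xi>) \<le> K * norm \<xi>))"

lemma GK: assumes "i \<in> {1..n}"
  shows "0 \<le> GK i \<and> (\<forall>\<xi>\<in>H 0. norm (G i \<xi>) \<le> GK i * norm \<xi>)"
proof -
  obtain K where K: "\<forall>\<xi>\<in>H 0. norm (G i \<xi>) \<le> K * norm \<xi>"
    using A1 assms unfolding bounded_linear_between_def by blast
  have "\<exists>K. 0 \<le> K \<and> (\<forall>\<xi>\<in>H 0. norm (G i \<xi>) \<le> K * norm \<xi>)"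
    apply (rule exI[of _ "max K 0"])
    using K by (metis max.cobounded1 max.cobounded2 mult_right_mono norm_ge_zero order_trans)
  from someI_ex[OF this] show ?thesis unfolding GK_def .
qed

lemma Gadj_in: "i \<in> {1..n} \<Longrightarrow> \<eta> \<in> H i \<Longrightarrow> Gadj i \<eta> \<in> H 0"
  using adj by auto

lemma Gadj_adj: "i \<in> {1..n} \<Longrightarrow> \<eta> \<in> H i \<Longrightarrow> \<xi> \<in> H 0 \<Longrightarrow> inner (G i \<xi>) \<eta> = inner \<xi> (Gadj i \<eta>)"
  using adj by auto

lemma Gadj_bd: assumes i: "i \<in> {1..n}" and e: "\<eta> \<in> H i"
  shows "norm (Gadj i \<eta>) \<le> GK i * norm \<eta>"
proof -
  let ?g = "Gadj i \<eta>"
  have g: "?g \<in> H 0" using Gadj_in[OF i e] .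
  have "norm ?g * norm ?g = inner ?g ?g" by (simp add: power2_norm_eq_inner[symmetric] power2_eq_square)
  also have "\<dots> = inner (G i ?g) \<eta>" using Gadj_adj[OF i e g] by simp
  also have "\<dots> \<le> norm (G i ?g) * norm \<eta>" by (rule norm_cauchy_schwarz)
  also have "\<dots> \<le> GK i * norm ?g * norm \<eta>" using GK[OF i] g by (simp add: mult_right_mono)
  finally have *: "norm ?g * norm ?g \<le> norm ?g * (GK i * norm \<eta>)" by (simp add: ac_simps)
  show ?thesis
  proof (cases "norm ?g = 0")
    case True thus ?thesis using GK[OF i] by simp
  next
    case False hence "norm ?g > 0" by simp
    with * show ?thesis by simp
  qed
qed

lemma Gn: "\<xi> \<in> H 0 \<Longrightarrow> G n \<xi> = \<xi>" using A1n by auto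

lemma Gadj_n: assumes e: "\<eta> \<in> H 0" shows "Gadj n \<eta> = \<eta>"
proof -
  have en: "\<eta> \<in> H n" using e H_n by simp
  let ?d = "Gadj n \<eta> - \<eta>"
  have d: "?d \<in> H 0" using Gadj_in[OF n_in en] e sub[of 0] by (auto intro: subspace_diff)
  have "inner ?d (Gadj n \<eta>) - inner ?d \<eta> = 0"
    using Gadj_adj[OF n_in en d, symmetric] Gn[OF d] by simp
  hence "inner ?d ?d = 0" by (simp add: inner_diff_right)
  thus ?thesis by simp
qed

definition sol where "sol = (SOME p. fst p \<in> H 0 \<and>
   (\<forall>i\<in>{1..n}. snd p i \<in> T_op (A i) (B i) (C i) (D i) (G i (fst p))) \<and>
   (\<Sum>i=1..n. Gadj i (snd p i)) = 0)"
definition "zeta = fst sol"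
definition "qq = snd sol"

lemma sol: "zeta \<in> H 0" "\<And>i. i\<in>{1..n} \<Longrightarrow> qq i \<in> T_op (A i) (B i) (C i) (D i) (G i zeta)"
   "(\<Sum>i=1..n. Gadj i (qq i)) = 0"
proof -
  have "\<exists>p. fst p \<in> H 0 \<and>
   (\<forall>i\<in>{1..n}. snd p i \<in> T_op (A i) (B i) (C i) (D i) (G i (fst p))) \<and>
   (\<Sum>i=1..n. Gadj i (snd p i)) = 0" using A6 by auto
  from someI_ex[OF this] show "zeta \<in> H 0" "\<And>i. i\<in>{1..n} \<Longrightarrow> qq i \<in> T_op (A i) (B i) (C i) (D i) (G i zeta)"
   "(\<Sum>i=1..n. Gadj i (qq i)) = 0" unfolding sol_def[symmetric] zeta_def qq_def by auto
qed

lemma Amono: "i \<in> {1..n} \<Longrightarrow> monotone_op (H i) (A i)"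
  using A2 by (auto simp: maximal_monotone_op_def)

lemma A_in: "i \<in> {1..n} \<Longrightarrow> a \<in> A i \<xi> \<Longrightarrow> \<xi> \<in> H i \<and> a \<in> H i"
  using Amono[of i] unfolding monotone_op_def by blast

lemma A_mono: "i \<in> {1..n} \<Longrightarrow> a \<in> A i \<xi> \<Longrightarrow> b \<in> A i \<eta> \<Longrightarrow> 0 \<le> inner (\<xi> - \<eta>) (a - b)"
  using Amono[of i] unfolding monotone_op_def by blast

lemma T_memD: "t0 \<in> T_op A0 B0 C0 D0 \<xi> \<Longrightarrow> \<exists>a\<in>A0 \<xi>. t0 = a + B0 \<xi> + C0 \<xi> + D0 \<xi>"
  by (auto simp: T_op_def)

lemma struct: assumes i: "i \<in> {1..n}"
  shows "x k i \<in> H i \<and> (\<exists>a\<in>A i (x k i). y k i = a + B i (x k i) + C i (G i (z k)) + D i (x k i))"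
proof (cases "w k i \<in> T_op (A i) (B i) (C i) (D i) (G i (z k))")
  case True
  with step_i i have e: "x k i = G i (z k)" "y k i = w k i" by auto
  from T_memD[OF True] obtain a where a: "a \<in> A i (G i (z k))"
    "w k i = a + B i (G i (z k)) + C i (G i (z k)) + D i (G i (z k))" by blast
  show ?thesis using a e A_in[OF i a(1)] by auto
next
  case False
  show ?thesis
  proof (cases "i \<in> ID")
    case True
    with False step_ii obtain s where rr: "0 < \<rho> k i"
      "s \<in> {\<rho> k i *\<^sub>R (a + D_lin (D i) (D' i) (G i (z k)) (x k i)) | a. a \<in> A i (x k i)}"
      "G i (z k) + \<rho> k i *\<^sub>R w k i - \<rho> k i *\<^sub>R (B i (G i (z k)) + C i (G i (z k))) = s + x k i"
      "y k i = (1 / \<rho> k i) *\<^sub>R (G i (z k) - x k i) + w k i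
                           + (B i (x k i) - B i (G i (z k)))
                           + (D i (x k i) - D_lin (D i) (D' i) (G i (z k)) (x k i))"
      unfolding resolvent_rel_def by blast
    then obtain a where a: "a \<in> A i (x k i)"
      "s = \<rho> k i *\<^sub>R (a + D_lin (D i) (D' i) (G i (z k)) (x k i))" by blast
    have "y k i = a + B i (x k i) + C i (G i (z k)) + D i (x k i)"
      unfolding rr(4) by (rule res_alg) (use rr(1,3) a(2) in auto)
    thus ?thesis using a A_in[OF i a(1)] by auto
  next
    case nID: False
    with False step_iii i obtain s where rr: "0 < \<rho> k i"
      "s \<in> {\<rho> k i *\<^sub>R a | a. a \<in> A i (x k i)}"
      "G i (z k) + \<rho> k i *\<^sub>R w k i - \<rho> k i *\<^sub>R (B i (G i (z k)) + C i (G i (z k))) = s + x k i"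
      "y k i = (1 / \<rho> k i) *\<^sub>R (G i (z k) - x k i) + w k i
                           + (B i (x k i) - B i (G i (z k)))"
      unfolding resolvent_rel_def by blast
    then obtain a where a: "a \<in> A i (x k i)" "s = \<rho> k i *\<^sub>R a" by blast
    have xin: "x k i \<in> H i" using A_in[OF i a(1)] by simp
    have D0: "D i (x k i) = 0" using A7 i nID xin by auto
    have "y k i = a + B i (x k i) + C i (G i (z k)) + D i (x k i)"
      using res_alg[of "\<rho> k i" "G i (z k)" "w k i" "B i (G i (z k))" "C i (G i (z k))" a 0 "x k i"
          "B i (x k i)" 0] rr(1,3) a(2) unfolding rr(4) D0 by auto
    thus ?thesis using a xin by auto
  qed
qed

definition cc where "cc i = real_of_ereal (inverse (4 * \<beta> i))"

lemma sep: assumes i: "i \<in> {1..n}" and zk: "z k \<in> H 0"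
  shows "0 \<le> inner (x k i - G i zeta) (y k i - qq i) + cc i * (norm (x k i - G i (z k)))\<^sup>2"
proof -
  obtain a where a: "a \<in> A i (x k i)" "y k i = a + B i (x k i) + C i (G i (z k)) + D i (x k i)"
    and xin: "x k i \<in> H i" using struct[OF i] by blast
  obtain a0 where a0: "a0 \<in> A i (G i zeta)"
    "qq i = a0 + B i (G i zeta) + C i (G i zeta) + D i (G i zeta)" using T_memD[OF sol(2)[OF i]] by blast
  have g: "G i zeta \<in> H i" using G_in[OF i sol(1)] .
  have gz: "G i (z k) \<in> H i" using G_in[OF i zk] .
  have m1: "0 \<le> inner (x k i - G i zeta) (a - a0)" using A_mono[OF i a(1) a0(1)] .
  have m2: "0 \<le> inner (x k i - G i zeta) (B i (x k i) - B i (G i zeta))"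
    using A3 i xin g by (auto simp: monotone_fun_on_def)
  have m3: "0 \<le> inner (x k i - G i zeta) (D i (x k i) - D i (G i zeta))"
    using A5 i xin g by (auto simp: monotone_fun_on_def)
  have cb: "0 < \<beta> i" "\<beta> i * ereal ((norm (C i (G i (z k)) - C i (G i zeta)))\<^sup>2)
      \<le> ereal (inner (G i (z k) - G i zeta) (C i (G i (z k)) - C i (G i zeta)))"
    using A4 i gz g by auto
  have m4: "0 \<le> inner ((x k i - G i (z k)) + (G i (z k) - G i zeta)) (C i (G i (z k)) - C i (G i zeta))
     + cc i * (norm (x k i - G i (z k)))\<^sup>2"
    unfolding cc_def by (rule coco[OF cb])
  have "y k i - qq i = (a - a0) + (B i (x k i) - B i (G i zeta)) + (D i (x k i) - D i (G i zeta))
     + (C i (G i (z k)) - C i (G i zeta))" using a(2) a0(2) by (simp add: algebra_simps)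
  hence "inner (x k i - G i zeta) (y k i - qq i) = inner (x k i - G i zeta) (a - a0)
     + inner (x k i - G i zeta) (B i (x k i) - B i (G i zeta))
     + inner (x k i - G i zeta) (D i (x k i) - D i (G i zeta))
     + inner ((x k i - G i (z k)) + (G i (z k) - G i zeta)) (C i (G i (z k)) - C i (G i zeta))"
    by (simp add: inner_add_right)
  thus ?thesis using m1 m2 m3 m4 by linarith
qed


lemma x_in: "i \<in> {1..n} \<Longrightarrow> x k i \<in> H i" using struct by blast

lemma y_in: assumes i: "i \<in> {1..n}" and zk: "z k \<in> H 0" shows "y k i \<in> H i"
proof -
  obtain a where a: "a \<in> A i (x k i)" "y k i = a + B i (x k i) + C i (G i (z k)) + D i (x k i)"
    and xin: "x k i \<in> H i" using struct[OF i] by blast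
  have "a \<in> H i" using A_in[OF i a(1)] by simp
  moreover have "B i (x k i) \<in> H i" using A3 i xin by auto
  moreover have "C i (G i (z k)) \<in> H i" using A4 i G_in[OF i zk] by auto
  moreover have "D i (x k i) \<in> H i" using A5 i xin by auto
  ultimately show ?thesis unfolding a(2) using subI[OF i] by (auto intro!: subspace_add)
qed

lemma qq_in: assumes i: "i \<in> {1..n}" shows "qq i \<in> H i"
proof -
  obtain a0 where a0: "a0 \<in> A i (G i zeta)"
    "qq i = a0 + B i (G i zeta) + C i (G i zeta) + D i (G i zeta)" using T_memD[OF sol(2)[OF i]] by blast
  have g: "G i zeta \<in> H i" using G_in[OF i sol(1)] .
  have "a0 \<in> H i" using A_in[OF i a0(1)] by simp
  moreover have "B i (G i zeta) \<in> H i" using A3 i g by auto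
  moreover have "C i (G i zeta) \<in> H i" using A4 i g by auto
  moreover have "D i (G i zeta) \<in> H i" using A5 i g by auto
  ultimately show ?thesis unfolding a0(2) using subI[OF i] by (auto intro!: subspace_add)
qed

lemma xn_in: "x k n \<in> H 0" using x_in[OF n_in] H_n by simp

lemma v_in: assumes zk: "z k \<in> H 0" shows "v k \<in> H 0"
  unfolding v_def[rule_format] using Gadj_in y_in[OF _ zk] sub[of 0]
  by (auto intro!: subspace_sum)

lemma u_in: assumes i: "i \<in> {1..n-1}" shows "u k i \<in> H i"
proof -
  have i': "i \<in> {1..n}" using i by auto
  show ?thesis using u_def i x_in[OF i'] G_in[OF i' xn_in] subI[OF i'] by (auto intro!: subspace_diff)
qed

lemma mem: "z k \<in> H 0 \<and> (\<forall>i\<in>{1..n-1}. w k i \<in> H i)"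
proof (induction k)
  case 0 thus ?case using init by simp
next
  case (Suc k)
  hence zk: "z k \<in> H 0" and wk: "\<forall>i\<in>{1..n-1}. w k i \<in> H i" by auto
  show ?case
  proof (cases "0 < \<phi> k")
    case True
    with upd_pos have e: "z (Suc k) = z k - (\<alpha> k / \<gamma>) *\<^sub>R v k"
      "\<forall>i\<in>{1..n-1}. w (Suc k) i = w k i - \<alpha> k *\<^sub>R u k i" by auto
    have "z (Suc k) \<in> H 0" unfolding e using zk v_in[OF zk] sub[of 0]
      by (auto intro!: subspace_diff subspace_scale)
    moreover have "\<forall>i\<in>{1..n-1}. w (Suc k) i \<in> H i"
    proof
      fix i assume i: "i \<in> {1..n-1}"
      hence "subspace (H i)" by (intro sub) auto
      thus "w (Suc k) i \<in> H i" using e(2) i wk u_in[OF i] by (auto intro!: subspace_diff subspace_scale)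
    qed
    ultimately show ?thesis by blast
  next
    case False
    with upd_nonpos have e: "z (Suc k) = z k" "\<forall>i\<in>{1..n-1}. w (Suc k) i = w k i" by auto
    thus ?thesis using zk wk by auto
  qed
qed

lemma zk_in: "z k \<in> H 0" using mem by blast
lemma wk_in: "i \<in> {1..n-1} \<Longrightarrow> w k i \<in> H i" using mem by blast

definition "SS k = inner (z k - zeta) (v k) + (\<Sum>i=1..n-1. inner (w k i - qq i) (u k i))"
definition "EE k = \<gamma> * (norm (z k - zeta))\<^sup>2 + (\<Sum>i=1..n-1. (norm (w k i - qq i))\<^sup>2)"

lemma S_ge: "\<phi> k \<le> SS k"
proof -
  have zk: "z k \<in> H 0" by (rule zk_in)
  have v1: "inner zeta (v k) = (\<Sum>i=1..n. inner (G i zeta) (y k i))"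
    unfolding v_def[rule_format] inner_sum_right
    by (rule sum.cong) (auto simp: Gadj_adj[OF _ y_in[OF _ zk] sol(1)])
  have qn: "(\<Sum>i=1..n-1. Gadj i (qq i)) = - qq n"
  proof -
    have "(\<Sum>i=1..n-1. Gadj i (qq i)) + Gadj n (qq n) = 0" using sol(3) sum_last[of "\<lambda>i. Gadj i (qq i)"] by simp
    moreover have "Gadj n (qq n) = qq n" using Gadj_n qq_in[OF n_in] H_n by simp
    ultimately show ?thesis by (simp add: eq_neg_iff_add_eq_0)
  qed
  have q1: "(\<Sum>i=1..n-1. inner (qq i) (u k i)) = (\<Sum>i=1..n. inner (qq i) (x k i))"
  proof -
    have "(\<Sum>i=1..n-1. inner (qq i) (u k i)) = (\<Sum>i=1..n-1. inner (qq i) (x k i) - inner (x k n) (Gadj i (qq i)))"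
    proof (rule sum.cong)
      fix i assume i: "i \<in> {1..n-1}"
      hence i': "i \<in> {1..n}" by auto
      have a: "inner (qq i) (G i (x k n)) = inner (x k n) (Gadj i (qq i))"
        using Gadj_adj[OF i' qq_in[OF i'] xn_in] by (simp add: inner_commute)
      have "u k i = x k i - G i (x k n)" using u_def i by auto
      thus "inner (qq i) (u k i) = inner (qq i) (x k i) - inner (x k n) (Gadj i (qq i))"
        by (simp add: inner_diff_right a)
    qed simp
    also have "\<dots> = (\<Sum>i=1..n-1. inner (qq i) (x k i)) - inner (x k n) (\<Sum>i=1..n-1. Gadj i (qq i))"
      by (simp add: sum_subtractf inner_sum_right)
    also have "\<dots> = (\<Sum>i=1..n. inner (qq i) (x k i))" using qn sum_last[of "\<lambda>i. inner (qq i) (x k i)"] by (simp add: inner_commute)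
    finally show ?thesis .
  qed
  have q2: "(\<Sum>i=1..n. inner (G i zeta) (qq i)) = 0"
  proof -
    have "(\<Sum>i=1..n. inner (G i zeta) (qq i)) = (\<Sum>i=1..n. inner zeta (Gadj i (qq i)))"
      by (rule sum.cong) (auto simp: Gadj_adj[OF _ qq_in sol(1)])
    also have "\<dots> = inner zeta (\<Sum>i=1..n. Gadj i (qq i))" by (simp add: inner_sum_right)
    finally show ?thesis using sol(3) by simp
  qed
  have pt: "\<And>i. inner (x k i - G i zeta) (y k i - qq i) + cc i * (norm (x k i - G i (z k)))\<^sup>2
      = (inner (x k i) (y k i) + cc i * (norm (x k i - G i (z k)))\<^sup>2) - inner (G i zeta) (y k i)
        - inner (qq i) (x k i) + inner (G i zeta) (qq i)"
    by (simp add: inner_diff_left inner_diff_right inner_commute)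
  have "SS k - \<phi> k = (\<Sum>i=1..n. inner (x k i) (y k i) + cc i * (norm (x k i - G i (z k)))\<^sup>2)
      - inner zeta (v k) - (\<Sum>i=1..n-1. inner (qq i) (u k i))"
    unfolding SS_def phi_def[rule_format] cc_def
    by (simp add: inner_diff_left sum_subtractf)
  also have "\<dots> = (\<Sum>i=1..n. inner (x k i - G i zeta) (y k i - qq i) + cc i * (norm (x k i - G i (z k)))\<^sup>2)"
    unfolding pt v1 q1 using q2 by (simp add: sum.distrib sum_subtractf)
  also have "\<dots> \<ge> 0" using sep[OF _ zk] by (intro sum_nonneg) auto
  finally show ?thesis by simp
qed

lemma normsq: "(norm (a - t *\<^sub>R b))\<^sup>2 = (norm a)\<^sup>2 - 2 * t * inner a b + t\<^sup>2 * (norm b)\<^sup>2"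
  by (simp only: power2_norm_eq_inner) (simp add: inner_diff_left inner_diff_right inner_commute algebra_simps power2_eq_square)

lemma pi_nonneg: "0 \<le> \<pi> k"
  using pi_def par by (auto intro!: add_nonneg_nonneg sum_nonneg)

lemma E_dec: "EE (Suc k) \<le> EE k"
proof (cases "0 < \<phi> k")
  case True
  with upd_pos have e: "\<tau>lo \<le> \<tau> k" "\<tau> k \<le> \<tau>hi" "\<alpha> k = \<tau> k * \<phi> k / \<pi> k"
    "z (Suc k) = z k - (\<alpha> k / \<gamma>) *\<^sub>R v k"
    "\<forall>i\<in>{1..n-1}. w (Suc k) i = w k i - \<alpha> k *\<^sub>R u k i" by auto
  have g: "\<gamma> > 0" using par by simp
  have ez: "\<gamma> * (norm (z (Suc k) - zeta))\<^sup>2 = \<gamma> * (norm (z k - zeta))\<^sup>2 - 2 * \<alpha> k * inner (z k - zeta) (v k)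
      + (\<alpha> k)\<^sup>2 * ((1/\<gamma>) * (norm (v k))\<^sup>2)"
  proof -
    have d: "z (Suc k) - zeta = (z k - zeta) - (\<alpha> k / \<gamma>) *\<^sub>R v k" using e(4) by (simp add: algebra_simps)
    have "(norm (z (Suc k) - zeta))\<^sup>2 = (norm (z k - zeta))\<^sup>2 - 2 * (\<alpha> k / \<gamma>) * inner (z k - zeta) (v k)
      + (\<alpha> k / \<gamma>)\<^sup>2 * (norm (v k))\<^sup>2" unfolding d by (rule normsq)
    thus ?thesis using g by (simp add: field_simps power2_eq_square)
  qed
  have ew: "(\<Sum>i=1..n-1. (norm (w (Suc k) i - qq i))\<^sup>2) = (\<Sum>i=1..n-1. (norm (w k i - qq i))\<^sup>2)
     - 2 * \<alpha> k * (\<Sum>i=1..n-1. inner (w k i - qq i) (u k i)) + (\<alpha> k)\<^sup>2 * (\<Sum>i=1..n-1. (norm (u k i))\<^sup>2)"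
  proof -
    have "(\<Sum>i=1..n-1. (norm (w (Suc k) i - qq i))\<^sup>2) = (\<Sum>i=1..n-1. (norm (w k i - qq i))\<^sup>2
     - 2 * \<alpha> k * inner (w k i - qq i) (u k i) + (\<alpha> k)\<^sup>2 * (norm (u k i))\<^sup>2)"
    proof (rule sum.cong)
      fix i assume "i \<in> {1..n-1}"
      hence d: "w (Suc k) i - qq i = (w k i - qq i) - \<alpha> k *\<^sub>R u k i" using e(5) by (simp add: algebra_simps)
      show "(norm (w (Suc k) i - qq i))\<^sup>2 = (norm (w k i - qq i))\<^sup>2
     - 2 * \<alpha> k * inner (w k i - qq i) (u k i) + (\<alpha> k)\<^sup>2 * (norm (u k i))\<^sup>2" unfolding d by (rule normsq)
    qed simp
    thus ?thesis by (simp add: sum.distrib sum_subtractf sum_distrib_left)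
  qed
  have E1: "EE (Suc k) = EE k - 2 * \<alpha> k * SS k + (\<alpha> k)\<^sup>2 * \<pi> k"
    unfolding EE_def SS_def pi_def[rule_format] ez ew by (simp add: algebra_simps)
  have tau2: "\<tau> k \<le> 2" using e(2) par by simp
  have al0: "0 \<le> \<alpha> k" using e(3) e(1) par True pi_nonneg[of k] by simp
  have a2: "(\<alpha> k)\<^sup>2 * \<pi> k \<le> 2 * \<alpha> k * \<phi> k"
  proof (cases "\<pi> k = 0")
    case True thus ?thesis using e(3) by simp
  next
    case False
    hence "\<alpha> k * \<pi> k = \<tau> k * \<phi> k" using e(3) by simp
    hence "(\<alpha> k)\<^sup>2 * \<pi> k = \<alpha> k * (\<tau> k * \<phi> k)" by (simp add: power2_eq_square)
    also have "\<dots> \<le> \<alpha> k * (2 * \<phi> k)" using al0 tau2 True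
      by (intro mult_left_mono) auto
    finally show ?thesis by simp
  qed
  have "\<alpha> k * \<phi> k \<le> \<alpha> k * SS k" using al0 S_ge[of k] by (rule mult_left_mono[rotated])
  thus ?thesis using E1 a2 by simp
next
  case False
  with upd_nonpos have e: "z (Suc k) = z k" "\<forall>i\<in>{1..n-1}. w (Suc k) i = w k i" by auto
  have "(\<Sum>i=1..n-1. (norm (w (Suc k) i - qq i))\<^sup>2) = (\<Sum>i=1..n-1. (norm (w k i - qq i))\<^sup>2)"
    by (rule sum.cong) (use e(2) in auto)
  thus ?thesis unfolding EE_def e(1) by simp
qed

lemma E_le: "EE k \<le> EE 0"
  using lift_Suc_antimono_le[of EE 0 k, OF E_dec] by simp


lemma z_bd: "bd z"
proof -
  have "\<And>k. norm (z k) \<le> norm zeta + sqrt (EE 0 / \<gamma>)"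
  proof -
    fix k
    have "\<gamma> * (norm (z k - zeta))\<^sup>2 \<le> EE 0" using E_le[of k] unfolding EE_def
      by (smt (verit) sum_nonneg zero_le_power2)
    hence "(norm (z k - zeta))\<^sup>2 \<le> EE 0 / \<gamma>" using par by (simp add: field_simps)
    hence "norm (z k - zeta) \<le> sqrt (EE 0 / \<gamma>)" by (simp add: real_le_rsqrt)
    thus "norm (z k) \<le> norm zeta + sqrt (EE 0 / \<gamma>)" using norm_triangle_sub[of "z k" zeta] by linarith
  qed
  thus ?thesis by (rule bdI)
qed

lemma w_bd1: assumes i: "i \<in> {1..n-1}" shows "bd (\<lambda>k. w k i)"
proof -
  have "\<And>k. norm (w k i) \<le> norm (qq i) + sqrt (EE 0)"
  proof -
    fix k
    have "(norm (w k i - qq i))\<^sup>2 \<le> (\<Sum>i=1..n-1. (norm (w k i - qq i))\<^sup>2)"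
      using i by (intro member_le_sum) auto
    moreover have "0 \<le> \<gamma> * (norm (z k - zeta))\<^sup>2" using par by simp
    ultimately have "(norm (w k i - qq i))\<^sup>2 \<le> EE 0" using E_le[of k] unfolding EE_def by linarith
    hence "norm (w k i - qq i) \<le> sqrt (EE 0)" by (simp add: real_le_rsqrt)
    thus "norm (w k i) \<le> norm (qq i) + sqrt (EE 0)" using norm_triangle_sub[of "w k i" "qq i"] by linarith
  qed
  thus ?thesis by (rule bdI)
qed

lemma w_bd: assumes i: "i \<in> {1..n}" shows "bd (\<lambda>k. w k i)"
proof (cases "i = n")
  case False thus ?thesis using w_bd1 i by auto
next
  case True
  have "\<forall>i\<in>{1..n-1}. \<exists>M. \<forall>k. norm (w k i) \<le> M" using w_bd1 unfolding bd_def by blast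
  then obtain M where M: "\<forall>i\<in>{1..n-1}. \<forall>k. norm (w k i) \<le> M i" by metis
  have "\<And>k. norm (w k n) \<le> (\<Sum>i=1..n-1. GK i * M i)"
  proof -
    fix k
    have "norm (w k n) = norm (\<Sum>i=1..n-1. Gadj i (w k i))" using wn by simp
    also have "\<dots> \<le> (\<Sum>i=1..n-1. norm (Gadj i (w k i)))" by (rule norm_sum)
    also have "\<dots> \<le> (\<Sum>i=1..n-1. GK i * M i)"
    proof (rule sum_mono)
      fix i assume i: "i \<in> {1..n-1}"
      hence i': "i \<in> {1..n}" by auto
      have "norm (Gadj i (w k i)) \<le> GK i * norm (w k i)" by (rule Gadj_bd[OF i' wk_in[OF i]])
      also have "\<dots> \<le> GK i * M i" using M i GK[OF i'] by (intro mult_left_mono) auto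
      finally show "norm (Gadj i (w k i)) \<le> GK i * M i" .
    qed
    finally show "norm (w k n) \<le> (\<Sum>i=1..n-1. GK i * M i)" .
  qed
  thus ?thesis using True by (auto intro: bdI)
qed

lemma Gz_bd: assumes i: "i \<in> {1..n}" shows "bd (\<lambda>k. G i (z k))"
proof -
  obtain M where "0 \<le> M" and M: "\<And>k. norm (z k) \<le> M" using bdE[OF z_bd] by blast
  have "\<And>k. norm (G i (z k)) \<le> GK i * M"
    using GK[OF i] zk_in M by (meson mult_left_mono order_trans)
  thus ?thesis by (rule bdI)
qed

lemma B_lin: assumes i: "i \<in> {1..n}" and e: "\<xi> \<in> H i" shows "norm (B i \<xi>) \<le> norm (B i 0) + ell i * norm \<xi>"
proof -
  have "norm (B i \<xi> - B i 0) \<le> ell i * norm (\<xi> - 0)" using A3 i e subspace_0[OF subI[OF i]] by blast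
  thus ?thesis using norm_triangle_sub[of "B i \<xi>" "B i 0"] by simp
qed

lemma C_lin: assumes i: "i \<in> {1..n}" and e: "\<xi> \<in> H i"
  shows "norm (C i \<xi>) \<le> norm (C i 0) + real_of_ereal (inverse (\<beta> i)) * norm \<xi>"
proof -
  have z0: "0 \<in> H i" using subspace_0[OF subI[OF i]] .
  have "\<beta> i * ereal ((norm (C i \<xi> - C i 0))\<^sup>2) \<le> ereal (inner (\<xi> - 0) (C i \<xi> - C i 0))"
    "0 < \<beta> i" using A4 i e z0 by blast+
  hence "norm (C i \<xi> - C i 0) \<le> real_of_ereal (inverse (\<beta> i)) * norm (\<xi> - 0)"
    by (intro coco_lip) auto
  thus ?thesis using norm_triangle_sub[of "C i \<xi>" "C i 0"] by simp
qed

lemma invb_nonneg: assumes "i \<in> {1..n}" shows "0 \<le> real_of_ereal (inverse (\<beta> i))"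
proof -
  have "0 < \<beta> i" using A4 assms by blast
  thus ?thesis by (cases "\<beta> i") auto
qed

lemma Dd: assumes i: "i \<in> {1..n}"
  shows "\<exists>K\<ge>0. \<forall>\<xi>\<in>H i. norm (D i \<xi>) \<le> norm (D i 0) + (K + m i * norm \<xi>) * norm \<xi> \<and>
     (\<forall>h\<in>H i. norm (D' i \<xi> h) \<le> (K + m i * norm \<xi>) * norm h)"
proof -
  have V: "subspace (H i)" by (rule subI[OF i])
  have z0: "0 \<in> H i" using subspace_0[OF V] .
  have dD: "\<And>\<xi>. \<xi> \<in> H i \<Longrightarrow> (D i has_derivative D' i \<xi>) (at \<xi> within H i)" using A5 i by auto
  have "bounded_linear (D' i 0)" using dD[OF z0] by (rule has_derivative_bounded_linear)
  then obtain K where K: "K > 0" "\<And>h. norm (D' i 0 h) \<le> norm h * K"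
    using bounded_linear.pos_bounded by blast
  have m0: "0 \<le> m i" using A5 i by auto
  have D'b: "\<And>\<xi> h. \<xi> \<in> H i \<Longrightarrow> h \<in> H i \<Longrightarrow> norm (D' i \<xi> h) \<le> (K + m i * norm \<xi>) * norm h"
  proof -
    fix \<xi> h assume e: "\<xi> \<in> H i" and h: "h \<in> H i"
    have "norm (D' i \<xi> h - D' i 0 h) \<le> m i * norm (\<xi> - 0) * norm h" using A5 i e z0 h by blast
    hence "norm (D' i \<xi> h) \<le> norm (D' i 0 h) + m i * norm \<xi> * norm h"
      using norm_triangle_sub[of "D' i \<xi> h" "D' i 0 h"] by simp
    thus "norm (D' i \<xi> h) \<le> (K + m i * norm \<xi>) * norm h" using K(2)[of h] by (simp add: algebra_simps)
  qed
  have Db: "\<And>\<xi>. \<xi> \<in> H i \<Longrightarrow> norm (D i \<xi>) \<le> norm (D i 0) + (K + m i * norm \<xi>) * norm \<xi>"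
  proof -
    fix \<xi> assume e: "\<xi> \<in> H i"
    have "norm (D i (0 + \<xi>) - D i 0) \<le> (K + m i * norm \<xi>) * norm \<xi>"
    proof (rule D_mvt[OF V dD z0 e])
      fix t :: real assume t: "0 \<le> t" "t \<le> 1"
      have te: "0 + t *\<^sub>R \<xi> \<in> H i" using V e by (simp add: subspace_scale)
      have "norm (D' i (0 + t *\<^sub>R \<xi>) \<xi>) \<le> (K + m i * norm (0 + t *\<^sub>R \<xi>)) * norm \<xi>" by (rule D'b[OF te e])
      also have "\<dots> \<le> (K + m i * norm \<xi>) * norm \<xi>"
        using t m0 by (intro mult_right_mono add_left_mono mult_left_mono) (auto simp: mult_left_le_one_le)
      finally show "norm (D' i (0 + t *\<^sub>R \<xi>) \<xi>) \<le> (K + m i * norm \<xi>) * norm \<xi>" .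
    qed
    thus "norm (D i \<xi>) \<le> norm (D i 0) + (K + m i * norm \<xi>) * norm \<xi>"
      using norm_triangle_sub[of "D i \<xi>" "D i 0"] by simp
  qed
  show ?thesis using K(1) Db D'b by (intro exI[of _ K]) auto
qed

lemma rho_pos: "i \<in> {1..n} \<Longrightarrow> 0 < \<rho> k i"
  using step_i step_ii step_iii par A7 by (cases "w k i \<in> T_op (A i) (B i) (C i) (D i) (G i (z k))"; cases "i \<in> ID") auto

lemma rho_up: assumes i: "i \<in> {1..n}" shows "\<exists>R. \<forall>k. \<rho> k i \<le> R"
proof -
  obtain R3 where R3: "\<forall>k. w k i \<notin> T_op (A i) (B i) (C i) (D i) (G i (z k)) \<longrightarrow> i \<notin> ID \<longrightarrow> \<rho> k i \<le> R3"
  proof (cases "i \<in> ID")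
    case True thus ?thesis using that by blast
  next
    case False
    then obtain lo up where "\<forall>k. w k i \<notin> T_op (A i) (B i) (C i) (D i) (G i (z k)) \<longrightarrow> lo \<le> \<rho> k i \<and> \<rho> k i \<le> up"
      using A8 i by blast
    thus ?thesis using that by blast
  qed
  have "\<forall>k. \<rho> k i \<le> max \<rho>hat (max (\<theta>hi / \<delta>hat) R3)"
  proof
    fix k
    show "\<rho> k i \<le> max \<rho>hat (max (\<theta>hi / \<delta>hat) R3)"
    proof (cases "w k i \<in> T_op (A i) (B i) (C i) (D i) (G i (z k))")
      case True thus ?thesis using step_i i by auto
    next
      case F: False
      show ?thesis
      proof (cases "i \<in> ID")
        case True
        with F step_ii have h: "0 < \<rho> k i" "4 * (ell i)\<^sup>2 * (\<rho> k i)\<^sup>2 + (real_of_ereal (inverse (\<beta> i)) + \<delta>hat) * \<rho> k i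
                          + (m i * \<rho> k i * norm (x k i - G i (z k)))\<^sup>2 \<le> \<theta>hi" by auto
        have "0 \<le> real_of_ereal (inverse (\<beta> i)) * \<rho> k i" using invb_nonneg[OF i] h(1) by simp
        hence "\<delta>hat * \<rho> k i \<le> \<theta>hi" using h(2)
          by (smt (verit, best) distrib_right mult_nonneg_nonneg zero_le_power2)
        hence "\<rho> k i \<le> \<theta>hi / \<delta>hat" using par by (simp add: field_simps)
        thus ?thesis by simp
      next
        case False thus ?thesis using R3 F by fastforce
      qed
    qed
  qed
  thus ?thesis by blast
qed

lemma rho_bd: assumes i: "i \<in> {1..n}" shows "bd (\<lambda>k. \<rho> k i)"
proof -
  obtain R where R: "\<And>k. \<rho> k i \<le> R" using rho_up[OF i] by blast
  have "\<And>k. norm (\<rho> k i) \<le> R" using R rho_pos[OF i] by (simp add: abs_of_pos)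
  thus ?thesis by (rule bdI)
qed


lemma res_ii: assumes i: "i \<in> ID" and F: "w k i \<notin> T_op (A i) (B i) (C i) (D i) (G i (z k))"
  shows "\<exists>a\<in>A i (x k i). G i (z k) + \<rho> k i *\<^sub>R w k i - \<rho> k i *\<^sub>R (B i (G i (z k)) + C i (G i (z k)))
     = \<rho> k i *\<^sub>R (a + D_lin (D i) (D' i) (G i (z k)) (x k i)) + x k i"
proof -
  from step_ii i F obtain s where "s \<in> {\<rho> k i *\<^sub>R (a + D_lin (D i) (D' i) (G i (z k)) (x k i)) | a. a \<in> A i (x k i)}"
      "G i (z k) + \<rho> k i *\<^sub>R w k i - \<rho> k i *\<^sub>R (B i (G i (z k)) + C i (G i (z k))) = s + x k i"
    unfolding resolvent_rel_def by blast
  thus ?thesis by blast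
qed

lemma res_iii: assumes i: "i \<in> {1..n} - ID" and F: "w k i \<notin> T_op (A i) (B i) (C i) (D i) (G i (z k))"
  shows "\<exists>a\<in>A i (x k i). G i (z k) + \<rho> k i *\<^sub>R w k i - \<rho> k i *\<^sub>R (B i (G i (z k)) + C i (G i (z k)))
     = \<rho> k i *\<^sub>R (a + 0) + x k i"
proof -
  from step_iii i F obtain s where "s \<in> {\<rho> k i *\<^sub>R a | a. a \<in> A i (x k i)}"
      "G i (z k) + \<rho> k i *\<^sub>R w k i - \<rho> k i *\<^sub>R (B i (G i (z k)) + C i (G i (z k))) = s + x k i"
    unfolding resolvent_rel_def by blast
  thus ?thesis by auto
qed

lemma x_bd: assumes i: "i \<in> {1..n}" shows "bd (\<lambda>k. x k i)"
proof -
  define g where "g = G i zeta"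
  have V: "subspace (H i)" using subI[OF i] .
  have gin: "g \<in> H i" unfolding g_def using G_in[OF i sol(1)] .
  obtain a0 where a0: "a0 \<in> A i g" using T_memD[OF sol(2)[OF i]] unfolding g_def by blast
  obtain M1 where "0 \<le> M1" and M1: "\<And>k. norm (G i (z k)) \<le> M1" using bdE[OF Gz_bd[OF i]] by blast
  obtain Mw where "0 \<le> Mw" and Mw: "\<And>k. norm (w k i) \<le> Mw" using bdE[OF w_bd[OF i]] by blast
  obtain Mr where "0 \<le> Mr" and Mr: "\<And>k. norm (\<rho> k i) \<le> Mr" using bdE[OF rho_bd[OF i]] by blast
  obtain K where "0 \<le> K" and K: "\<forall>\<xi>\<in>H i. norm (D i \<xi>) \<le> norm (D i 0) + (K + m i * norm \<xi>) * norm \<xi> \<and>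
     (\<forall>h\<in>H i. norm (D' i \<xi> h) \<le> (K + m i * norm \<xi>) * norm h)" using Dd[OF i] by blast
  have m0: "0 \<le> m i" using A5 i by auto
  have l0: "0 \<le> ell i" using A3 i by auto
  have ib: "0 \<le> real_of_ereal (inverse (\<beta> i))" using invb_nonneg[OF i] .
  define p where "p k = G i (z k) + \<rho> k i *\<^sub>R w k i - \<rho> k i *\<^sub>R (B i (G i (z k)) + C i (G i (z k)))" for k
  define Mp where "Mp = M1 + Mr * Mw + Mr * ((norm (B i 0) + ell i * M1) + (norm (C i 0) + real_of_ereal (inverse (\<beta> i)) * M1))"
  define Md where "Md = (norm (D i 0) + (K + m i * M1) * M1) + (K + m i * M1) * (norm g + M1)"
  have gz: "\<And>k. G i (z k) \<in> H i" using G_in[OF i zk_in] .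
  have pb: "\<And>k. norm (p k) \<le> Mp"
  proof -
    fix k
    have "norm (p k) \<le> norm (G i (z k)) + norm (\<rho> k i *\<^sub>R w k i) + norm (\<rho> k i *\<^sub>R (B i (G i (z k)) + C i (G i (z k))))"
    proof -
      have "norm (p k) \<le> norm (G i (z k) + \<rho> k i *\<^sub>R w k i) + norm (\<rho> k i *\<^sub>R (B i (G i (z k)) + C i (G i (z k))))"
        unfolding p_def by (rule norm_triangle_ineq4)
      moreover have "norm (G i (z k) + \<rho> k i *\<^sub>R w k i) \<le> norm (G i (z k)) + norm (\<rho> k i *\<^sub>R w k i)"
        by (rule norm_triangle_ineq)
      ultimately show ?thesis by linarith
    qed
    also have "norm (\<rho> k i *\<^sub>R w k i) \<le> Mr * Mw" using mult_mono[OF Mr[of k] Mw[of k] \<open>0 \<le> Mr\<close> norm_ge_zero] by simp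
    also have "norm (\<rho> k i *\<^sub>R (B i (G i (z k)) + C i (G i (z k)))) \<le>
       Mr * ((norm (B i 0) + ell i * M1) + (norm (C i 0) + real_of_ereal (inverse (\<beta> i)) * M1))"
    proof -
      have "norm (B i (G i (z k)) + C i (G i (z k))) \<le> norm (B i (G i (z k))) + norm (C i (G i (z k)))"
        by (rule norm_triangle_ineq)
      also have "\<dots> \<le> (norm (B i 0) + ell i * M1) + (norm (C i 0) + real_of_ereal (inverse (\<beta> i)) * M1)"
        using B_lin[OF i gz[of k]] C_lin[OF i gz[of k]] mult_left_mono[OF M1[of k] l0] mult_left_mono[OF M1[of k] ib]
        by linarith
      finally have bc: "norm (B i (G i (z k)) + C i (G i (z k))) \<le> (norm (B i 0) + ell i * M1) + (norm (C i 0) + real_of_ereal (inverse (\<beta> i)) * M1)" .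
      show ?thesis using mult_mono[OF Mr[of k] bc \<open>0 \<le> Mr\<close> norm_ge_zero] by simp
    qed
    finally show "norm (p k) \<le> Mp" unfolding Mp_def using M1[of k] by simp
  qed
  have Dlg: "\<And>k. norm (D_lin (D i) (D' i) (G i (z k)) g) \<le> Md"
  proof -
    fix k
    have "norm (D_lin (D i) (D' i) (G i (z k)) g) \<le> norm (D i (G i (z k))) + norm (D' i (G i (z k)) (g - G i (z k)))"
      unfolding D_lin_def by (rule norm_triangle_ineq)
    also have "norm (D i (G i (z k))) \<le> norm (D i 0) + (K + m i * M1) * M1"
    proof -
      have "norm (D i (G i (z k))) \<le> norm (D i 0) + (K + m i * norm (G i (z k))) * norm (G i (z k))"
        using K gz[of k] by blast
      thus ?thesis using quad_mono[OF \<open>0 \<le> K\<close> m0 M1[of k] norm_ge_zero] by linarith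
    qed
    also have "norm (D' i (G i (z k)) (g - G i (z k))) \<le> (K + m i * M1) * (norm g + M1)"
    proof -
      have "g - G i (z k) \<in> H i" using V gin gz by (simp add: subspace_diff)
      hence "norm (D' i (G i (z k)) (g - G i (z k))) \<le> (K + m i * norm (G i (z k))) * norm (g - G i (z k))"
        using K gz by blast
      also have "\<dots> \<le> (K + m i * M1) * (norm g + M1)"
        using M1[of k] m0 \<open>0 \<le> K\<close> \<open>0 \<le> M1\<close> norm_triangle_ineq4[of g "G i (z k)"]
        by (intro mult_mono add_left_mono mult_left_mono) auto
      finally show ?thesis .
    qed
    finally show "norm (D_lin (D i) (D' i) (G i (z k)) g) \<le> Md" unfolding Md_def by simp
  qed
  have "\<And>k. norm (x k i) \<le> M1 + 2 * norm g + Mp + Mr * (norm a0 + Md)"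
  proof -
    fix k
    have Mp0: "0 \<le> Mp" using pb[of k] norm_ge_zero[of "p k"] by linarith
    have Md0: "0 \<le> Md" using Dlg[of k] norm_ge_zero[of "D_lin (D i) (D' i) (G i (z k)) g"] by linarith
    have rp: "0 < \<rho> k i" using rho_pos[OF i] .
    show "norm (x k i) \<le> M1 + 2 * norm g + Mp + Mr * (norm a0 + Md)"
    proof (cases "w k i \<in> T_op (A i) (B i) (C i) (D i) (G i (z k))")
      case True
      hence xe: "x k i = G i (z k)" using step_i i by auto
      have "0 \<le> Mr * (norm a0 + Md)" using Md0 \<open>0 \<le> Mr\<close> by simp
      thus ?thesis unfolding xe using M1[of k] Mp0 norm_ge_zero[of g] by linarith
    next
      case F: False
      have xin: "x k i \<in> H i" using x_in[OF i] .
      have mono1: "\<And>a. a \<in> A i (x k i) \<Longrightarrow> 0 \<le> inner (x k i - g) (a - a0)"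
        using A_mono[OF i _ a0] by blast
      obtain L a where La: "a \<in> A i (x k i)" "p k = \<rho> k i *\<^sub>R (a + L (x k i)) + x k i"
        and Lmono: "0 \<le> inner (x k i - g) (L (x k i) - L g)"
        and Lb: "norm (L g) \<le> Md"
      proof (cases "i \<in> ID")
        case True
        then obtain a where a: "a \<in> A i (x k i)" "p k = \<rho> k i *\<^sub>R (a + D_lin (D i) (D' i) (G i (z k)) (x k i)) + x k i"
          using res_ii[OF True F] unfolding p_def by blast
        have dD: "\<And>\<xi>. \<xi> \<in> H i \<Longrightarrow> (D i has_derivative D' i \<xi>) (at \<xi> within H i)" using A5 i by auto
        have lin: "linear (D' i (G i (z k)))"
          using has_derivative_bounded_linear[OF dD[OF gz[of k]]] bounded_linear.linear by blast
        have xg: "x k i - g \<in> H i" using V xin gin by (simp add: subspace_diff)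
        have "D_lin (D i) (D' i) (G i (z k)) (x k i) - D_lin (D i) (D' i) (G i (z k)) g
            = D' i (G i (z k)) (x k i - g)"
        proof -
          have "x k i - g = (x k i - G i (z k)) - (g - G i (z k))" by simp
          hence "D' i (G i (z k)) (x k i - g) = D' i (G i (z k)) (x k i - G i (z k)) - D' i (G i (z k)) (g - G i (z k))"
            using linear_diff[OF lin] by metis
          thus ?thesis unfolding D_lin_def by simp
        qed
        moreover have "0 \<le> inner (x k i - g) (D' i (G i (z k)) (x k i - g))"
          by (rule Dprime_mono[OF V dD _ gz xg]) (use A5 i in \<open>auto simp: monotone_fun_on_def\<close>)
        ultimately show ?thesis
          using that[of a "D_lin (D i) (D' i) (G i (z k))"] a Dlg[of k] by simp
      next
        case False
        with i have i3: "i \<in> {1..n} - ID" by simp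
        obtain a where "a \<in> A i (x k i)" "p k = \<rho> k i *\<^sub>R (a + 0) + x k i"
          using res_iii[OF i3 F] unfolding p_def by blast
        thus ?thesis using that[of a "\<lambda>_. 0"] Md0 by simp
      qed
      have "0 \<le> inner (x k i - g) ((p k - \<rho> k i *\<^sub>R (a0 + L g)) - x k i)"
      proof -
        have "(p k - \<rho> k i *\<^sub>R (a0 + L g)) - x k i = \<rho> k i *\<^sub>R ((a - a0) + (L (x k i) - L g))"
          using La(2) by (simp add: algebra_simps)
        hence "inner (x k i - g) ((p k - \<rho> k i *\<^sub>R (a0 + L g)) - x k i)
          = \<rho> k i * (inner (x k i - g) (a - a0) + inner (x k i - g) (L (x k i) - L g))"
          by (simp add: inner_add_right)
        thus ?thesis using rp mono1[OF La(1)] Lmono by simp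
      qed
      hence "norm (x k i - g) \<le> norm (p k - \<rho> k i *\<^sub>R (a0 + L g) - g)" by (rule res_bound)
      also have "\<dots> \<le> norm (p k) + \<bar>\<rho> k i\<bar> * (norm a0 + norm (L g)) + norm g" by (rule normP)
      also have "\<dots> \<le> Mp + Mr * (norm a0 + Md) + norm g"
        using pb[of k] Mr[of k] Lb \<open>0 \<le> Mr\<close> by (intro add_mono mult_mono) auto
      finally have "norm (x k i - g) \<le> Mp + Mr * (norm a0 + Md) + norm g" .
      thus ?thesis using norm_triangle_sub[of "x k i" g] \<open>0 \<le> M1\<close> by linarith
    qed
  qed
  thus ?thesis by (rule bdI)
qed


lemma rho_lo: assumes i: "i \<in> {1..n}" shows "\<exists>r>0. \<forall>k. r \<le> \<rho> k i"
proof -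
  obtain Mx where "0 \<le> Mx" and Mx: "\<And>k. norm (x k i) \<le> Mx" using bdE[OF x_bd[OF i]] by blast
  obtain M1 where "0 \<le> M1" and M1: "\<And>k. norm (G i (z k)) \<le> M1" using bdE[OF Gz_bd[OF i]] by blast
  define X where "X = Mx + M1"
  have m0: "0 \<le> m i" using A5 i by auto
  have ib: "0 \<le> real_of_ereal (inverse (\<beta> i))" using invb_nonneg[OF i] .
  define Kc where "Kc = 4 * (ell i)\<^sup>2 + (real_of_ereal (inverse (\<beta> i)) + \<delta>hat) + (m i)\<^sup>2 * X\<^sup>2"
  have Kc: "0 < Kc"
  proof -
    have "0 \<le> 4 * (ell i)\<^sup>2" "0 \<le> (m i)\<^sup>2 * X\<^sup>2" by simp_all
    thus ?thesis unfolding Kc_def using ib par by linarith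
  qed
  obtain lo3 where lo3: "0 < lo3" "\<forall>k. w k i \<notin> T_op (A i) (B i) (C i) (D i) (G i (z k)) \<longrightarrow> i \<notin> ID \<longrightarrow> lo3 \<le> \<rho> k i"
  proof (cases "i \<in> ID")
    case True thus ?thesis using that[of 1] by simp
  next
    case False
    then obtain lo up where "0 < lo" "\<forall>k. w k i \<notin> T_op (A i) (B i) (C i) (D i) (G i (z k)) \<longrightarrow> lo \<le> \<rho> k i \<and> \<rho> k i \<le> up"
      using A8 i by blast
    thus ?thesis using that[of lo] by blast
  qed
  define r where "r = min \<rho>hat (min (min 1 (\<theta>lo / Kc)) lo3)"
  have r0: "0 < r" unfolding r_def using par Kc lo3(1) by simp
  have "\<forall>k. r \<le> \<rho> k i"
  proof
    fix k
    show "r \<le> \<rho> k i"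
    proof (cases "w k i \<in> T_op (A i) (B i) (C i) (D i) (G i (z k))")
      case True thus ?thesis using step_i i unfolding r_def by auto
    next
      case F: False
      show ?thesis
      proof (cases "i \<in> ID")
        case False thus ?thesis using lo3 F unfolding r_def by fastforce
      next
        case True
        with F step_ii have h: "0 < \<rho> k i" "\<theta>lo \<le> 4 * (ell i)\<^sup>2 * (\<rho> k i)\<^sup>2 + (real_of_ereal (inverse (\<beta> i)) + \<delta>hat) * \<rho> k i
                          + (m i * \<rho> k i * norm (x k i - G i (z k)))\<^sup>2" by auto
        have "min 1 (\<theta>lo / Kc) \<le> \<rho> k i"
        proof (cases "1 \<le> \<rho> k i")
          case True thus ?thesis by simp
        next
          case False
          have e1: "(\<rho> k i)\<^sup>2 \<le> \<rho> k i"
          proof -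
            have "\<rho> k i * \<rho> k i \<le> 1 * \<rho> k i" using False h(1) by (intro mult_right_mono) auto
            thus ?thesis by (simp add: power2_eq_square)
          qed
          have dX: "norm (x k i - G i (z k)) \<le> X"
            unfolding X_def using norm_triangle_ineq4[of "x k i" "G i (z k)"] Mx[of k] M1[of k] by linarith
          have "(m i * norm (x k i - G i (z k)))\<^sup>2 \<le> (m i * X)\<^sup>2"
            using m0 dX by (intro power_mono mult_left_mono) auto
          hence "(m i * norm (x k i - G i (z k)))\<^sup>2 * (\<rho> k i)\<^sup>2 \<le> (m i * X)\<^sup>2 * (\<rho> k i)\<^sup>2"
            by (rule mult_right_mono) simp
          also have "\<dots> \<le> (m i * X)\<^sup>2 * \<rho> k i" using e1 by (rule mult_left_mono) simp
          finally have e2: "(m i * \<rho> k i * norm (x k i - G i (z k)))\<^sup>2 \<le> (m i)\<^sup>2 * X\<^sup>2 * \<rho> k i"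
            by (simp add: power_mult_distrib algebra_simps)
          have e3: "4 * (ell i)\<^sup>2 * (\<rho> k i)\<^sup>2 \<le> 4 * (ell i)\<^sup>2 * \<rho> k i" using e1 by (rule mult_left_mono) simp
          have "Kc * \<rho> k i = 4 * (ell i)\<^sup>2 * \<rho> k i + (real_of_ereal (inverse (\<beta> i)) + \<delta>hat) * \<rho> k i
              + (m i)\<^sup>2 * X\<^sup>2 * \<rho> k i" unfolding Kc_def by (simp add: algebra_simps)
          hence "\<theta>lo \<le> Kc * \<rho> k i" using h(2) e2 e3 by linarith
          hence "\<theta>lo / Kc \<le> \<rho> k i" using Kc by (simp add: divide_le_eq mult.commute)
          thus ?thesis by simp
        qed
        thus ?thesis unfolding r_def by linarith
      qed
    qed
  qed
  thus ?thesis using r0 by blast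
qed

lemma y_bd: assumes i: "i \<in> {1..n}" shows "bd (\<lambda>k. y k i)"
proof -
  have V: "subspace (H i)" using subI[OF i] .
  obtain r where r: "0 < r" "\<And>k. r \<le> \<rho> k i" using rho_lo[OF i] by blast
  obtain Mx where "0 \<le> Mx" and Mx: "\<And>k. norm (x k i) \<le> Mx" using bdE[OF x_bd[OF i]] by blast
  obtain M1 where "0 \<le> M1" and M1: "\<And>k. norm (G i (z k)) \<le> M1" using bdE[OF Gz_bd[OF i]] by blast
  obtain Mw where "0 \<le> Mw" and Mw: "\<And>k. norm (w k i) \<le> Mw" using bdE[OF w_bd[OF i]] by blast
  obtain K where "0 \<le> K" and K: "\<forall>\<xi>\<in>H i. norm (D i \<xi>) \<le> norm (D i 0) + (K + m i * norm \<xi>) * norm \<xi> \<and>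
     (\<forall>h\<in>H i. norm (D' i \<xi> h) \<le> (K + m i * norm \<xi>) * norm h)" using Dd[OF i] by blast
  have m0: "0 \<le> m i" using A5 i by auto
  have l0: "0 \<le> ell i" using A3 i by auto
  define Mb where "Mb = Mx + M1"
  define Dm where "Dm = norm (D i 0) + (K + m i * Mb) * Mb"
  have Mb0: "0 \<le> Mb" unfolding Mb_def using \<open>0 \<le> Mx\<close> \<open>0 \<le> M1\<close> by simp
  have Dm0: "0 \<le> Dm" unfolding Dm_def using Mb0 m0 \<open>0 \<le> K\<close> by simp
  have Dbd: "\<And>\<xi>. \<xi> \<in> H i \<Longrightarrow> norm \<xi> \<le> Mb \<Longrightarrow> norm (D i \<xi>) \<le> Dm"
  proof -
    fix \<xi> assume e: "\<xi> \<in> H i" "norm \<xi> \<le> Mb"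
    have "norm (D i \<xi>) \<le> norm (D i 0) + (K + m i * norm \<xi>) * norm \<xi>" using K e by blast
    thus "norm (D i \<xi>) \<le> Dm" unfolding Dm_def using quad_mono[OF \<open>0 \<le> K\<close> m0 e(2) norm_ge_zero] by linarith
  qed
  define Y where "Y = Mb / r + Mw + ell i * Mb + (2 * Dm + (K + m i * Mb) * Mb)"
  have "\<And>k. norm (y k i) \<le> Y"
  proof -
    fix k
    have xin: "x k i \<in> H i" using x_in[OF i] .
    have gz: "G i (z k) \<in> H i" using G_in[OF i zk_in] .
    have dif: "norm (G i (z k) - x k i) \<le> Mb" unfolding Mb_def
      using norm_triangle_ineq4[of "G i (z k)" "x k i"] Mx[of k] M1[of k] by linarith
    have dif2: "norm (x k i - G i (z k)) \<le> Mb" using dif by (simp add: norm_minus_commute)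
    have xMb: "norm (x k i) \<le> Mb" "norm (G i (z k)) \<le> Mb" unfolding Mb_def using Mx[of k] M1[of k] \<open>0 \<le> Mx\<close> \<open>0 \<le> M1\<close> by linarith+
    have t1: "norm ((1 / \<rho> k i) *\<^sub>R (G i (z k) - x k i)) \<le> Mb / r"
    proof -
      have rp: "0 < \<rho> k i" using r(1) r(2)[of k] by linarith
      have "norm ((1 / \<rho> k i) *\<^sub>R (G i (z k) - x k i)) = (1 / \<rho> k i) * norm (G i (z k) - x k i)"
        using rp by simp
      also have "\<dots> \<le> (1 / r) * Mb" using rp r dif Mb0
        by (intro mult_mono) (auto simp: divide_simps)
      finally show ?thesis by simp
    qed
    have t3: "norm (B i (x k i) - B i (G i (z k))) \<le> ell i * Mb"
      using A3 i xin gz mult_left_mono[OF dif2 l0] by (meson order_trans)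
    have t4: "norm (D i (x k i) - D_lin (D i) (D' i) (G i (z k)) (x k i)) \<le> 2 * Dm + (K + m i * Mb) * Mb"
    proof -
      have eq: "D i (x k i) - D_lin (D i) (D' i) (G i (z k)) (x k i)
          = D i (x k i) - D i (G i (z k)) - D' i (G i (z k)) (x k i - G i (z k))"
        unfolding D_lin_def by (simp add: algebra_simps)
      have "norm (D i (x k i) - D i (G i (z k)) - D' i (G i (z k)) (x k i - G i (z k)))
         \<le> norm (D i (x k i) - D i (G i (z k))) + norm (D' i (G i (z k)) (x k i - G i (z k)))"
        by (rule norm_triangle_ineq4)
      moreover have "norm (D i (x k i) - D i (G i (z k))) \<le> norm (D i (x k i)) + norm (D i (G i (z k)))"
        by (rule norm_triangle_ineq4)
      ultimately have "norm (D i (x k i) - D_lin (D i) (D' i) (G i (z k)) (x k i))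
          \<le> norm (D i (x k i)) + norm (D i (G i (z k))) + norm (D' i (G i (z k)) (x k i - G i (z k)))"
        unfolding eq by linarith
      moreover have "norm (D' i (G i (z k)) (x k i - G i (z k))) \<le> (K + m i * Mb) * Mb"
      proof -
        have xg: "x k i - G i (z k) \<in> H i" using V xin gz by (simp add: subspace_diff)
        have "norm (D' i (G i (z k)) (x k i - G i (z k))) \<le> (K + m i * norm (G i (z k))) * norm (x k i - G i (z k))"
          using K gz xg by blast
        also have "\<dots> \<le> (K + m i * Mb) * Mb"
          using xMb(2) dif2 m0 \<open>0 \<le> K\<close> Mb0
          by (intro mult_mono add_left_mono mult_left_mono) auto
        finally show ?thesis .
      qed
      ultimately show ?thesis using Dbd[OF xin xMb(1)] Dbd[OF gz xMb(2)] by simp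
    qed
    have nn: "0 \<le> Mb / r" "0 \<le> ell i * Mb" "0 \<le> (K + m i * Mb) * Mb"
      using Mb0 r(1) l0 m0 \<open>0 \<le> K\<close> by auto
    show "norm (y k i) \<le> Y"
    proof (cases "w k i \<in> T_op (A i) (B i) (C i) (D i) (G i (z k))")
      case True
      hence "y k i = w k i" using step_i i by auto
      thus ?thesis unfolding Y_def using Mw[of k] nn Dm0 by simp
    next
      case F: False
      show ?thesis
      proof (cases "i \<in> ID")
        case True
        with F step_ii have "y k i = (1 / \<rho> k i) *\<^sub>R (G i (z k) - x k i) + w k i
                           + (B i (x k i) - B i (G i (z k)))
                           + (D i (x k i) - D_lin (D i) (D' i) (G i (z k)) (x k i))" by auto
        hence "norm (y k i) \<le> norm ((1 / \<rho> k i) *\<^sub>R (G i (z k) - x k i)) + norm (w k i)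
             + norm (B i (x k i) - B i (G i (z k))) + norm (D i (x k i) - D_lin (D i) (D' i) (G i (z k)) (x k i))"
          using norm4 by metis
        thus ?thesis unfolding Y_def using t1 t3 t4 Mw[of k] by linarith
      next
        case False
        with F step_iii i have "y k i = (1 / \<rho> k i) *\<^sub>R (G i (z k) - x k i) + w k i
                           + (B i (x k i) - B i (G i (z k))) + 0" by auto
        hence "norm (y k i) \<le> norm ((1 / \<rho> k i) *\<^sub>R (G i (z k) - x k i)) + norm (w k i)
             + norm (B i (x k i) - B i (G i (z k))) + norm (0::'a)"
          using norm4 by metis
        thus ?thesis unfolding Y_def using t1 t3 Mw[of k] nn Dm0 by simp
      qed
    qed
  qed
  thus ?thesis by (rule bdI)
qed

lemma bd_bounded: "bd f \<Longrightarrow> bounded (range f)"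
  unfolding bd_def bounded_iff by auto

lemma main: "(\<forall>i\<in>{1..n}. bounded (range (\<lambda>k. \<rho> k i)))
       \<and> (\<forall>i\<in>{1..n}. bounded (range (\<lambda>k. x k i)))
       \<and> (\<exists>\<rho>min \<rho>max. 0 < \<rho>min \<and> \<rho>min \<le> \<rho>max \<and>
            (\<forall>i\<in>{1..n}. \<forall>k. \<rho>min \<le> \<rho> k i \<and> \<rho> k i \<le> \<rho>max))
       \<and> (\<forall>i\<in>{1..n}. bounded (range (\<lambda>k. y k i)))"
proof -
  have "\<forall>i\<in>{1..n}. \<exists>lo. 0 < lo \<and> (\<forall>k. lo \<le> \<rho> k i)" using rho_lo by blast
  then obtain lo where lo: "\<forall>i\<in>{1..n}. 0 < lo i \<and> (\<forall>k. lo i \<le> \<rho> k i)" by metis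
  have "\<forall>i\<in>{1..n}. \<exists>hi. \<forall>k. \<rho> k i \<le> hi" using rho_up by blast
  then obtain hi where hi: "\<forall>i\<in>{1..n}. \<forall>k. \<rho> k i \<le> hi i" by metis
  define rmin where "rmin = Min (lo ` {1..n})"
  define rmax where "rmax = Max (hi ` {1..n})"
  have ne: "{1..n} \<noteq> {}" using n2 by auto
  have "0 < rmin" unfolding rmin_def using lo ne by (simp add: Min_gr_iff)
  moreover have bnds: "\<forall>i\<in>{1..n}. \<forall>k. rmin \<le> \<rho> k i \<and> \<rho> k i \<le> rmax"
  proof (intro ballI allI conjI)
    fix i k assume i: "i \<in> {1..n}"
    have "rmin \<le> lo i" unfolding rmin_def using i by simp
    moreover have "lo i \<le> \<rho> k i" using lo i by blast
    ultimately show "rmin \<le> \<rho> k i" by linarith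
    have "hi i \<le> rmax" unfolding rmax_def using i by simp
    moreover have "\<rho> k i \<le> hi i" using hi i by blast
    ultimately show "\<rho> k i \<le> rmax" by linarith
  qed
  moreover have "rmin \<le> rmax" using bnds n_in by force
  ultimately have c: "\<exists>\<rho>min \<rho>max. 0 < \<rho>min \<and> \<rho>min \<le> \<rho>max \<and>
            (\<forall>i\<in>{1..n}. \<forall>k. \<rho>min \<le> \<rho> k i \<and> \<rho> k i \<le> \<rho>max)" by blast
  have a: "\<forall>i\<in>{1..n}. bounded (range (\<lambda>k. \<rho> k i))" using bd_bounded[OF rho_bd] by blast
  have b: "\<forall>i\<in>{1..n}. bounded (range (\<lambda>k. x k i))" using bd_bounded[OF x_bd] by blast
  have d: "\<forall>i\<in>{1..n}. bounded (range (\<lambda>k. y k i))" using bd_bounded[OF y_bd] by blast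
  show ?thesis using a b c d by (intro conjI)
qed

end

theorem lemma4p3:
  fixes H :: "nat \<Rightarrow> 'a::{real_inner, complete_space} set"
    and n :: nat
    and G Gadj :: "nat \<Rightarrow> 'a \<Rightarrow> 'a"
    and A :: "nat \<Rightarrow> 'a \<Rightarrow> 'a set"
    and B C D :: "nat \<Rightarrow> 'a \<Rightarrow> 'a"
    and D' :: "nat \<Rightarrow> 'a \<Rightarrow> 'a \<Rightarrow> 'a"
    and ell m :: "nat \<Rightarrow> real"
    and \<beta> :: "nat \<Rightarrow> ereal"
    and ID :: "nat set"
    and \<tau>lo \<tau>hi \<theta>lo \<theta>hi \<rho>hat \<delta>hat \<gamma> :: real
    and z :: "nat \<Rightarrow> 'a"
    and w x y u :: "nat \<Rightarrow> nat \<Rightarrow> 'a"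
    and v :: "nat \<Rightarrow> 'a"
    and \<rho> :: "nat \<Rightarrow> nat \<Rightarrow> real"
    and \<tau> \<alpha> \<phi> \<pi> :: "nat \<Rightarrow> real"
  assumes n2: "n \<ge> 2"
    \<comment> \<open>Hilbert spaces H_0..H_{n-1} as closed subspaces of an ambient Hilbert space; H_n = H_0\<close>
    and H_sub: "\<forall>i\<le>n. closed_subspace (H i)"
    and H_n: "H n = H 0"
    \<comment> \<open>(A1) and adjoints\<close>
    and A1: "\<forall>i\<in>{1..n}. bounded_linear_between (H 0) (H i) (G i)"
    and A1n: "\<forall>\<xi>\<in>H 0. G n \<xi> = \<xi>"
    and adj: "\<forall>i\<in>{1..n}. \<forall>\<eta>\<in>H i. Gadj i \<eta> \<in> H 0 \<and>
                 (\<forall>\<xi>\<in>H 0. inner (G i \<xi>) \<eta> = inner \<xi> (Gadj i \<eta>))"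
    \<comment> \<open>(A2)\<close>
    and A2: "\<forall>i\<in>{1..n}. maximal_monotone_op (H i) (A i)"
    \<comment> \<open>(A3)\<close>
    and A3: "\<forall>i\<in>{1..n}. (\<forall>\<xi>\<in>H i. B i \<xi> \<in> H i) \<and> monotone_fun_on (H i) (B i) \<and> 0 \<le> ell i \<and>
               (\<forall>\<xi>\<in>H i. \<forall>\<eta>\<in>H i. norm (B i \<xi> - B i \<eta>) \<le> ell i * norm (\<xi> - \<eta>))"
    \<comment> \<open>(A4), with ereal conventions: \<infinity> * 0 = 0\<close>
    and A4: "\<forall>i\<in>{1..n}. (\<forall>\<xi>\<in>H i. C i \<xi> \<in> H i) \<and> 0 < \<beta> i \<and>
               (\<forall>\<xi>\<in>H i. \<forall>\<eta>\<in>H i. \<beta> i * ereal ((norm (C i \<xi> - C i \<eta>))\<^sup>2)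
                                      \<le> ereal (inner (\<xi> - \<eta>) (C i \<xi> - C i \<eta>)))"
    \<comment> \<open>(A5)\<close>
    and A5: "\<forall>i\<in>{1..n}. (\<forall>\<xi>\<in>H i. D i \<xi> \<in> H i) \<and> monotone_fun_on (H i) (D i) \<and> 0 \<le> m i \<and>
               (\<forall>\<xi>\<in>H i. (D i has_derivative D' i \<xi>) (at \<xi> within H i) \<and>
                           (\<forall>h\<in>H i. D' i \<xi> h \<in> H i)) \<and>
               (\<forall>\<xi>\<in>H i. \<forall>\<eta>\<in>H i. \<forall>h\<in>H i.
                   norm (D' i \<xi> h - D' i \<eta> h) \<le> m i * norm (\<xi> - \<eta>) * norm h)"
    \<comment> \<open>(A6)\<close>
    and A6: "\<exists>\<zeta>\<in>H 0. \<exists>q :: nat \<Rightarrow> 'a. (\<forall>i\<in>{1..n}. q i \<in> T_op (A i) (B i) (C i) (D i) (G i \<zeta>)) \<and>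
               (\<Sum>i=1..n. Gadj i (q i)) = 0"
    \<comment> \<open>(A7)\<close>
    and A7: "ID \<subseteq> {1..n} \<and> (\<forall>i\<in>ID. 0 < m i) \<and>
               (\<forall>i\<in>{1..n} - ID. m i = 0 \<and> (\<forall>\<xi>\<in>H i. D i \<xi> = 0))"
    \<comment> \<open>Algorithm PS: parameters\<close>
    and par: "0 < \<tau>lo \<and> \<tau>lo < \<tau>hi \<and> \<tau>hi < 2 \<and> 0 < \<theta>lo \<and> \<theta>lo < \<theta>hi \<and> \<theta>hi < 2 \<and>
              0 < \<rho>hat \<and> 0 < \<delta>hat \<and> 0 < \<gamma>"
    \<comment> \<open>initial point in the product space\<close>
    and init: "z 0 \<in> H 0 \<and> (\<forall>i\<in>{1..n-1}. w 0 i \<in> H i)"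
    \<comment> \<open>w_n^k := - sum_{i=1}^{n-1} G_i^* w_i^k\<close>
    and wn: "\<forall>k. w k n = - (\<Sum>i=1..n-1. Gadj i (w k i))"
    \<comment> \<open>case (i)\<close>
    and step_i: "\<forall>k. \<forall>i\<in>{1..n}. w k i \<in> T_op (A i) (B i) (C i) (D i) (G i (z k)) \<longrightarrow>
                   \<rho> k i = \<rho>hat \<and> x k i = G i (z k) \<and> y k i = w k i"
    \<comment> \<open>case (ii)\<close>
    and step_ii: "\<forall>k. \<forall>i\<in>ID. w k i \<notin> T_op (A i) (B i) (C i) (D i) (G i (z k)) \<longrightarrow>
                   0 < \<rho> k i \<and>
                   resolvent_rel (\<lambda>\<xi>. {\<rho> k i *\<^sub>R (a + D_lin (D i) (D' i) (G i (z k)) \<xi>) | a. a \<in> A i \<xi>})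
                     (G i (z k) + \<rho> k i *\<^sub>R w k i - \<rho> k i *\<^sub>R (B i (G i (z k)) + C i (G i (z k))))
                     (x k i) \<and>
                   \<theta>lo \<le> 4 * (ell i)\<^sup>2 * (\<rho> k i)\<^sup>2 + (real_of_ereal (inverse (\<beta> i)) + \<delta>hat) * \<rho> k i
                          + (m i * \<rho> k i * norm (x k i - G i (z k)))\<^sup>2 \<and>
                   4 * (ell i)\<^sup>2 * (\<rho> k i)\<^sup>2 + (real_of_ereal (inverse (\<beta> i)) + \<delta>hat) * \<rho> k i
                          + (m i * \<rho> k i * norm (x k i - G i (z k)))\<^sup>2 \<le> \<theta>hi \<and>
                   y k i = (1 / \<rho> k i) *\<^sub>R (G i (z k) - x k i) + w k i
                           + (B i (x k i) - B i (G i (z k)))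
                           + (D i (x k i) - D_lin (D i) (D' i) (G i (z k)) (x k i))"
    \<comment> \<open>case (iii)\<close>
    and step_iii: "\<forall>k. \<forall>i\<in>{1..n} - ID. w k i \<notin> T_op (A i) (B i) (C i) (D i) (G i (z k)) \<longrightarrow>
                   0 < \<rho> k i \<and>
                   resolvent_rel (\<lambda>\<xi>. {\<rho> k i *\<^sub>R a | a. a \<in> A i \<xi>})
                     (G i (z k) + \<rho> k i *\<^sub>R w k i - \<rho> k i *\<^sub>R (B i (G i (z k)) + C i (G i (z k))))
                     (x k i) \<and>
                   y k i = (1 / \<rho> k i) *\<^sub>R (G i (z k) - x k i) + w k i
                           + (B i (x k i) - B i (G i (z k)))"
    and u_def: "\<forall>k. \<forall>i\<in>{1..n-1}. u k i = x k i - G i (x k n)"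
    and v_def: "\<forall>k. v k = (\<Sum>i=1..n. Gadj i (y k i))"
    and phi_def: "\<forall>k. \<phi> k = inner (z k) (v k) + (\<Sum>i=1..n-1. inner (w k i) (u k i))
                     - (\<Sum>i=1..n. inner (x k i) (y k i)
                          + real_of_ereal (inverse (4 * \<beta> i)) * (norm (x k i - G i (z k)))\<^sup>2)"
    and pi_def: "\<forall>k. \<pi> k = (1 / \<gamma>) * (norm (v k))\<^sup>2 + (\<Sum>i=1..n-1. (norm (u k i))\<^sup>2)"
    and upd_pos: "\<forall>k. 0 < \<phi> k \<longrightarrow>
                   \<tau>lo \<le> \<tau> k \<and> \<tau> k \<le> \<tau>hi \<and> \<alpha> k = \<tau> k * \<phi> k / \<pi> k \<and>
                   z (Suc k) = z k - (\<alpha> k / \<gamma>) *\<^sub>R v k \<and>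
                   (\<forall>i\<in>{1..n-1}. w (Suc k) i = w k i - \<alpha> k *\<^sub>R u k i)"
    and upd_nonpos: "\<forall>k. \<not> 0 < \<phi> k \<longrightarrow>
                   z (Suc k) = z k \<and> (\<forall>i\<in>{1..n-1}. w (Suc k) i = w k i)"
    \<comment> \<open>(A8); upper bound 1/(1/(4 beta_i) + l_i) computed in ereal (1/0 = \<infinity>)\<close>
    and A8: "\<forall>i\<in>{1..n} - ID. \<exists>\<rho>lo \<rho>up. 0 < \<rho>lo \<and> \<rho>lo \<le> \<rho>up \<and>
               ereal \<rho>up < inverse (inverse (4 * \<beta> i) + ereal (ell i)) \<and>
               (\<forall>k. w k i \<notin> T_op (A i) (B i) (C i) (D i) (G i (z k)) \<longrightarrow>
                     \<rho>lo \<le> \<rho> k i \<and> \<rho> k i \<le> \<rho>up)"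
  shows "(\<forall>i\<in>{1..n}. bounded (range (\<lambda>k. \<rho> k i)))
       \<and> (\<forall>i\<in>{1..n}. bounded (range (\<lambda>k. x k i)))
       \<and> (\<exists>\<rho>min \<rho>max. 0 < \<rho>min \<and> \<rho>min \<le> \<rho>max \<and>
            (\<forall>i\<in>{1..n}. \<forall>k. \<rho>min \<le> \<rho> k i \<and> \<rho> k i \<le> \<rho>max))
       \<and> (\<forall>i\<in>{1..n}. bounded (range (\<lambda>k. y k i)))"
proof -
  have "PS H n G Gadj A B C D D' ell m \<beta> ID \<tau>lo \<tau>hi \<theta>lo \<theta>hi \<rho>hat \<delta>hat \<gamma> z w x y u v \<rho> \<tau> \<alpha> \<phi> \<pi>" by (rule PS.intro) (fact assms)+
  thus ?thesis by (rule PS.main)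
qed

end
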